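(* Let $n\ge 5$, $k\ge 2$ with $n-k\ge 2$, let $1\le i\le k$, and let $I\subseteq\langle n\rangle$ be nonempty. Then the subgraph $A^{(i,I)}_{n,k}$ of $A_{n,k}$ is Hamiltonian connected, i.e. for any two distinct vertices $u,v$ of $A^{(i,I)}_{n,k}$ there is a path from $u$ to $v$ visiting every vertex of $A^{(i,I)}_{n,k}$ exactly once.
   Context: For integers $n>k\ge 1$, let $\langle n\rangle=\{1,\dots,n\}$. The arrangement graph $A_{n,k}$ has vertex set the set of all sequences $u=u_1u_2\cdots u_k$ with $u_i\in\langle n\rangle$ and $u_i\ne u_j$ for $i\ne j$, and two vertices are adjacent iff they differ in exactly one position. For $l\in\langle k\rangle$ and $I\subseteq\langle n\rangle$, $A^{(l,I)}_{n,k}$ denotes the subgraph of $A_{n,k}$ induced by the set of vertices $p=p_1\cdots p_k$ with $p_l\in I$ (for $I=\{j\}$ this is written $A^{(l,j)}_{n,k}$, and it is isomorphic to $A_{n-1,k-1}$). *)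

theory Defs
  imports Main
begin

text \<open>Vertices of the arrangement graph A(n,k): sequences u_1...u_k of pairwise distinct
 elements of {1..n}, represented as lists of length k (position l is the list index l-1).\<close>
definition arr_vertices :: "nat \<Rightarrow> nat \<Rightarrow> nat list set" where
  "arr_vertices n k = {u. length u = k \<and> distinct u \<and> set u \<subseteq> {1..n}}"

definition arr_adj :: "nat list \<Rightarrow> nat list \<Rightarrow> bool" where
  "arr_adj u v \<longleftrightarrow> length u = length v \<and> card {j. j < length u \<and> u ! j \<noteq> v ! j} = 1"

definition arr_sub_vertices :: "nat \<Rightarrow> nat \<Rightarrow> nat \<Rightarrow> nat set \<Rightarrow> nat list set" where
  "arr_sub_vertices n k l I = {p \<in> arr_vertices n k. p ! (l - 1) \<in> I}"

definition ham_path :: "('a \<Rightarrow> 'a \<Rightarrow> bool) \<Rightarrow> 'a set \<Rightarrow> 'a \<Rightarrow> 'a \<Rightarrow> 'a list \<Rightarrow> bool" where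
  "ham_path adj V u v P \<longleftrightarrow> P \<noteq> [] \<and> hd P = u \<and> last P = v \<and> distinct P \<and> set P = V
     \<and> (\<forall>j. Suc j < length P \<longrightarrow> adj (P ! j) (P ! Suc j))"

definition hamiltonian_connected :: "('a \<Rightarrow> 'a \<Rightarrow> bool) \<Rightarrow> 'a set \<Rightarrow> bool" where
  "hamiltonian_connected adj V \<longleftrightarrow>
     (\<forall>u\<in>V. \<forall>v\<in>V. u \<noteq> v \<longrightarrow> (\<exists>P. ham_path adj V u v P))"

end

theory Submission
  imports Defs
begin



definition hc2 :: "('a \<Rightarrow> 'a \<Rightarrow> bool) \<Rightarrow> 'a set \<Rightarrow> bool" where
  "hc2 adj V \<longleftrightarrow> (\<forall>y\<in>V. \<forall>x\<in>V. (y \<noteq> x \<or> V = {y}) \<longrightarrow> (\<exists>P. ham_path adj V y x P))"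

definition pth :: "('a \<Rightarrow> 'a \<Rightarrow> bool) \<Rightarrow> 'a list \<Rightarrow> bool" where
  "pth adj P \<longleftrightarrow> (\<forall>j. Suc j < length P \<longrightarrow> adj (P!j) (P!Suc j))"

lemma ham_path_pth: "ham_path adj V a b P \<longleftrightarrow> P \<noteq> [] \<and> hd P = a \<and> last P = b \<and> distinct P \<and> set P = V \<and> pth adj P"
  by (simp add: ham_path_def pth_def)

lemma hc_hc2: "hamiltonian_connected adj V \<Longrightarrow> hc2 adj V"
  unfolding hc2_def hamiltonian_connected_def
proof (intro ballI impI)
  fix y x assume *: "\<forall>u\<in>V. \<forall>v\<in>V. u \<noteq> v \<longrightarrow> (\<exists>P. ham_path adj V u v P)" "y\<in>V" "x\<in>V" "y \<noteq> x \<or> V = {y}"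
  show "\<exists>P. ham_path adj V y x P"
  proof (cases "y = x")
    case True with * have "V = {y}" by auto
    then show ?thesis using True by (intro exI[of _ "[y]"]) (auto simp: ham_path_def)
  next
    case False with * show ?thesis by auto
  qed
qed

lemma pth_append:
  "pth adj (P @ Q) \<longleftrightarrow> pth adj P \<and> pth adj Q \<and> (P \<noteq> [] \<and> Q \<noteq> [] \<longrightarrow> adj (last P) (hd Q))"
proof
  assume a: "pth adj (P @ Q)"
  have 1: "pth adj P" unfolding pth_def
  proof (intro allI impI)
    fix j assume "Suc j < length P"
    with a[unfolded pth_def, rule_format, of j] show "adj (P!j) (P!Suc j)" by (simp add: nth_append)
  qed
  have 2: "pth adj Q" unfolding pth_def
  proof (intro allI impI)
    fix j assume "Suc j < length Q"
    with a[unfolded pth_def, rule_format, of "length P + j"] show "adj (Q!j) (Q!Suc j)" by (simp add: nth_append)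
  qed
  have 3: "adj (last P) (hd Q)" if "P \<noteq> []" "Q \<noteq> []"
  proof -
    have "Suc (length P - 1) < length (P @ Q)" using that by simp
    from a[unfolded pth_def, rule_format, OF this] that show ?thesis
      by (simp add: nth_append last_conv_nth hd_conv_nth)
  qed
  show "pth adj P \<and> pth adj Q \<and> (P \<noteq> [] \<and> Q \<noteq> [] \<longrightarrow> adj (last P) (hd Q))" using 1 2 3 by blast
next
  assume a: "pth adj P \<and> pth adj Q \<and> (P \<noteq> [] \<and> Q \<noteq> [] \<longrightarrow> adj (last P) (hd Q))"
  show "pth adj (P @ Q)" unfolding pth_def
  proof (intro allI impI)
    fix j assume j: "Suc j < length (P @ Q)"
    consider "Suc j < length P" | "Suc j = length P" | "j \<ge> length P" by linarith
    then show "adj ((P@Q)!j) ((P@Q)!Suc j)"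
    proof cases
      case 1 then show ?thesis using a by (simp add: nth_append pth_def)
    next
      case 2
      then have "P \<noteq> []" "Q \<noteq> []" using j by auto
      moreover have "(P@Q)!j = last P"
      proof -
        have "j = length P - Suc 0" using 2 by simp
        then show ?thesis using 2 \<open>P \<noteq> []\<close> by (simp add: nth_append last_conv_nth)
      qed
      moreover have "(P@Q)!Suc j = hd Q" using 2 \<open>Q \<noteq> []\<close> by (simp add: nth_append hd_conv_nth)
      ultimately show ?thesis using a by simp
    next
      case 3
      then have "Suc (j - length P) < length Q" using j by simp
      with a have "adj (Q!(j - length P)) (Q!Suc (j - length P))" by (simp add: pth_def)
      moreover have "Suc j - length P = Suc (j - length P)" using 3 by simp
      ultimately show ?thesis using 3 by (simp add: nth_append)
    qed
  qed
qed

lemma ham_path_append: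
  assumes "ham_path adj A y x P" "ham_path adj B x' v Q" "A \<inter> B = {}" "adj x x'"
  shows "ham_path adj (A \<union> B) y v (P @ Q)"
  using assms by (auto simp: ham_path_pth pth_append)

lemma pth_take_drop:
  assumes "pth adj P" shows "pth adj (take n P)" "pth adj (drop n P)"
proof -
  have "pth adj (take n P @ drop n P)" using assms by simp
  then show "pth adj (take n P)" "pth adj (drop n P)" unfolding pth_append by auto
qed

lemma ham_path_splice:
  assumes P: "ham_path adj A u v P" and j: "Suc j < length P" and Q: "ham_path adj B w' z' Q"
    and AB: "A \<inter> B = {}" and a1: "adj (P!j) w'" and a2: "adj z' (P!Suc j)"
  shows "ham_path adj (A \<union> B) u v (take (Suc j) P @ Q @ drop (Suc j) P)"
proof -
  let ?P1 = "take (Suc j) P" and ?P2 = "drop (Suc j) P"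
  have PP: "P = ?P1 @ ?P2" by simp
  have ne: "?P1 \<noteq> []" "?P2 \<noteq> []" using j by auto
  have l1: "last ?P1 = P!j" using j by (subst last_conv_nth) (auto simp: min_def)
  have h2: "hd ?P2 = P!Suc j" using j by (simp add: hd_drop_conv_nth)
  have pP: "pth adj ?P1" "pth adj ?P2" using P pth_take_drop by (auto simp: ham_path_pth)
  have "distinct (?P1 @ ?P2)" using P by (simp add: ham_path_pth)
  then have d: "distinct ?P1 \<and> distinct ?P2 \<and> set ?P1 \<inter> set ?P2 = {}" by (simp only: distinct_append)
  have "set (?P1 @ ?P2) = A" using P by (simp add: ham_path_pth)
  then have sA: "set ?P1 \<union> set ?P2 = A" by (simp only: set_append)
  have hdP: "hd ?P1 = u" using P ne by (auto simp: ham_path_pth)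
  have lP: "last ?P2 = v"
  proof -
    have "last P = v" using P by (simp add: ham_path_pth)
    then show ?thesis using ne by (metis PP last_appendR)
  qed
  have Qf: "Q \<noteq> []" "hd Q = w'" "last Q = z'" "distinct Q" "set Q = B" "pth adj Q" using Q by (auto simp: ham_path_pth)
  show ?thesis unfolding ham_path_pth
  proof (intro conjI)
    show "?P1 @ Q @ ?P2 \<noteq> []" using ne by simp
    show "hd (?P1 @ Q @ ?P2) = u" using ne hdP by simp
    show "last (?P1 @ Q @ ?P2) = v" using ne lP by simp
    show "distinct (?P1 @ Q @ ?P2)" using d Qf sA AB by (auto simp: distinct_append)
    show "set (?P1 @ Q @ ?P2) = A \<union> B" using sA Qf by auto
    show "pth adj (?P1 @ Q @ ?P2)" using pP Qf ne l1 h2 a1 a2 by (simp add: pth_append)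
  qed
qed

lemma pth_rev:
  assumes "pth adj P" "\<And>a b. adj a b \<Longrightarrow> adj b a" shows "pth adj (rev P)"
  unfolding pth_def
proof (intro allI impI)
  fix j assume j: "Suc j < length (rev P)"
  have "adj (P!(length P - Suc (Suc j))) (P!Suc (length P - Suc (Suc j)))"
    using assms(1) j by (simp add: pth_def)
  moreover have "Suc (length P - Suc (Suc j)) = length P - Suc j" using j by simp
  ultimately show "adj (rev P ! j) (rev P ! Suc j)" using j assms(2) by (simp add: rev_nth)
qed

lemma ham_path_rev:
  assumes "ham_path adj V u v P" "\<And>a b. adj a b \<Longrightarrow> adj b a" shows "ham_path adj V v u (rev P)"
  using assms pth_rev by (auto simp: ham_path_pth hd_rev last_rev)

definition gts :: "('a \<Rightarrow> 'a \<Rightarrow> bool) \<Rightarrow> 'a set \<Rightarrow> 'a set \<Rightarrow> bool" where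
  "gts adj P Q \<longleftrightarrow> (\<forall>y\<in>P. \<forall>w\<in>Q. \<exists>x\<in>P. \<exists>x'\<in>Q. adj x x' \<and> (x \<noteq> y \<or> P = {y}) \<and> (x' \<noteq> w \<or> Q = {w}))"

lemma chain:
  assumes "distinct cs" "cs \<noteq> []"
    "\<forall>c\<in>set cs. B c \<noteq> {} \<and> hc2 adj (B c)"
    "\<forall>c\<in>set cs. \<forall>c'\<in>set cs. c \<noteq> c' \<longrightarrow> B c \<inter> B c' = {} \<and> gts adj (B c) (B c')"
    "y \<in> B (hd cs)" "v \<in> B (last cs)" "y \<noteq> v \<or> (\<Union>c\<in>set cs. B c) = {y}"
  shows "\<exists>P. ham_path adj (\<Union>c\<in>set cs. B c) y v P"
  using assms
proof (induction cs arbitrary: y)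
  case Nil then show ?case by simp
next
  case (Cons c cs)
  show ?case
  proof (cases "cs = []")
    case True
    then show ?thesis using Cons.prems by (auto simp: hc2_def)
  next
    case False
    then obtain c2 rest where cs: "cs = c2 # rest" by (cases cs) auto
    define w where "w = (if rest = [] then v else (SOME w. w \<in> B c2))"
    have w: "w \<in> B c2"
    proof (cases "rest = []")
      case True then show ?thesis using Cons.prems cs by (simp add: w_def)
    next
      case False
      have "B c2 \<noteq> {}" using Cons.prems cs by auto
      then show ?thesis using False by (simp add: w_def some_in_eq)
    qed
    have cc2: "c \<noteq> c2" using Cons.prems cs by auto
    have "gts adj (B c) (B c2)" using Cons.prems(4) cs cc2 by auto
    with Cons.prems(5) w obtain x x' where xx: "x \<in> B c" "x' \<in> B c2" "adj x x'" "x \<noteq> y \<or> B c = {y}"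
       "x' \<noteq> w \<or> B c2 = {w}"
      unfolding gts_def by fastforce
    have "hc2 adj (B c)" using Cons.prems by auto
    then obtain P1 where P1: "ham_path adj (B c) y x P1"
      using Cons.prems(5) xx unfolding hc2_def by fastforce
    have cond: "x' \<noteq> v \<or> (\<Union>c\<in>set cs. B c) = {x'}"
    proof (cases "rest = []")
      case True
      then show ?thesis using xx cs by (auto simp: w_def)
    next
      case False
      have "last rest \<in> set rest" using False by simp
      then have "last rest \<noteq> c2" using Cons.prems(1) cs by auto
      moreover have "v \<in> B (last rest)" using Cons.prems(6) cs False by simp
      moreover have "B (last rest) \<inter> B c2 = {}" using Cons.prems(4) cs \<open>last rest \<in> set rest\<close> calculation(1) by auto
      ultimately show ?thesis using xx by auto
    qed
    have "\<exists>Q. ham_path adj (\<Union>c\<in>set cs. B c) x' v Q"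
      apply (rule Cons.IH)
      using Cons.prems cs xx cond by auto
    then obtain Q where Q: "ham_path adj (\<Union>c\<in>set cs. B c) x' v Q" by blast
    have disj: "B c \<inter> (\<Union>c\<in>set cs. B c) = {}" using Cons.prems(1,4) by fastforce
    from ham_path_append[OF P1 Q disj xx(3)] show ?thesis by auto
  qed
qed

lemma chain_first:
  assumes "distinct (c0 # cs)" "cs \<noteq> []"
    "\<forall>c\<in>set (c0 # cs). B c \<noteq> {} \<and> hc2 adj (B c)"
    "\<forall>c\<in>set (c0 # cs). \<forall>c'\<in>set (c0 # cs). c \<noteq> c' \<longrightarrow> B c \<inter> B c' = {} \<and> gts adj (B c) (B c')"
    "y \<in> B c0" "v \<in> B (last cs)"
  shows "\<exists>x x' Q. x \<in> B c0 \<and> (x \<noteq> y \<or> B c0 = {y}) \<and> adj x x' \<and> ham_path adj (\<Union>c\<in>set cs. B c) x' v Q"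
proof -
  obtain c2 rest where cs: "cs = c2 # rest" using assms(2) by (cases cs) auto
  define w where "w = (if rest = [] then v else (SOME w. w \<in> B c2))"
  have w: "w \<in> B c2"
  proof (cases "rest = []")
    case True then show ?thesis using assms cs by (simp add: w_def)
  next
    case False
    have "B c2 \<noteq> {}" using assms cs by auto
    then show ?thesis using False by (simp add: w_def some_in_eq)
  qed
  have cc2: "c0 \<noteq> c2" using assms cs by auto
  have "gts adj (B c0) (B c2)" using assms(4) cs cc2 by auto
  with assms(5) w obtain x x' where xx: "x \<in> B c0" "x' \<in> B c2" "adj x x'" "x \<noteq> y \<or> B c0 = {y}"
     "x' \<noteq> w \<or> B c2 = {w}"
    unfolding gts_def by fastforce
  have cond: "x' \<noteq> v \<or> (\<Union>c\<in>set cs. B c) = {x'}"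
  proof (cases "rest = []")
    case True
    then show ?thesis using xx cs by (auto simp: w_def)
  next
    case False
    have "last rest \<in> set rest" using False by simp
    then have "last rest \<noteq> c2" using assms(1) cs by auto
    moreover have "v \<in> B (last rest)" using assms(6) cs False by simp
    moreover have "B (last rest) \<inter> B c2 = {}" using assms(4) cs \<open>last rest \<in> set rest\<close> calculation(1) by auto
    ultimately show ?thesis using xx by auto
  qed
  have "\<exists>Q. ham_path adj (\<Union>c\<in>set cs. B c) x' v Q"
    apply (rule chain)
    using assms cs xx cond by auto
  then show ?thesis using xx by blast
qed




lemma ham_path_iso:
  assumes Q: "ham_path adj W a b Q"
    and b1: "\<forall>x\<in>W. \<psi> x \<in> V" and b2: "\<forall>x\<in>V. \<phi> x \<in> W \<and> \<psi> (\<phi> x) = x" and b3: "\<forall>x\<in>W. \<phi> (\<psi> x) = x"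
    and ad: "\<forall>x\<in>W. \<forall>y\<in>W. adj x y \<longrightarrow> adj' (\<psi> x) (\<psi> y)"
  shows "ham_path adj' V (\<psi> a) (\<psi> b) (map \<psi> Q)"
proof -
  have Qf: "Q \<noteq> []" "hd Q = a" "last Q = b" "distinct Q" "set Q = W" "pth adj Q" using Q by (auto simp: ham_path_pth)
  have inj: "inj_on \<psi> W" by (metis b3 inj_on_inverseI)
  have "set (map \<psi> Q) = V"
  proof
    show "set (map \<psi> Q) \<subseteq> V" using b1 Qf by auto
    show "V \<subseteq> set (map \<psi> Q)"
    proof
      fix x assume "x \<in> V"
      then have "x = \<psi> (\<phi> x)" "\<phi> x \<in> W" using b2 by auto
      then show "x \<in> set (map \<psi> Q)" using Qf by auto
    qed
  qed
  moreover have "distinct (map \<psi> Q)" using inj Qf by (simp add: distinct_map)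
  moreover have "pth adj' (map \<psi> Q)" unfolding pth_def
  proof (intro allI impI)
    fix j assume j: "Suc j < length (map \<psi> Q)"
    then have "Q!j \<in> set Q" "Q!Suc j \<in> set Q" by simp_all
    then have "Q!j \<in> W" "Q!Suc j \<in> W" using Qf by auto
    moreover have "adj (Q!j) (Q!Suc j)" using Qf j by (simp add: pth_def)
    ultimately show "adj' (map \<psi> Q ! j) (map \<psi> Q ! Suc j)" using ad j by simp
  qed
  ultimately show ?thesis using Qf by (simp add: ham_path_pth hd_map last_map)
qed

definition cnt :: "nat list \<Rightarrow> nat list \<Rightarrow> nat" where
  "cnt p q = length (filter (\<lambda>(a,b). a \<noteq> b) (zip p q))"

lemma arr_adj_cnt: "arr_adj p q \<longleftrightarrow> length p = length q \<and> cnt p q = 1"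
proof -
  have "length p = length q \<Longrightarrow> cnt p q = card {j. j < length p \<and> p!j \<noteq> q!j}"
    unfolding cnt_def length_filter_conv_card by (auto intro!: arg_cong[where f=card])
  then show ?thesis unfolding arr_adj_def by auto
qed

lemma cnt_Cons[simp]: "cnt (a#p) (b#q) = (if a \<noteq> b then 1 else 0) + cnt p q"
  by (simp add: cnt_def)

lemma cnt_zero: "length p = length q \<Longrightarrow> cnt p q = 0 \<longleftrightarrow> p = q"
proof (induction p arbitrary: q)
  case Nil then show ?case by (simp add: cnt_def)
next
  case (Cons a p) then show ?case by (cases q) auto
qed

lemma arr_adj_Cons: "arr_adj (a#p) (b#q) \<longleftrightarrow> length p = length q \<and> (if a = b then arr_adj p q else p = q)"
  by (auto simp: arr_adj_cnt cnt_zero)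

lemma arr_adj_sym: "arr_adj p q \<Longrightarrow> arr_adj q p"
proof -
  have "cnt p q = cnt q p" if "length p = length q" for p q using that
  proof (induction p arbitrary: q)
    case Nil then show ?case by (simp add: cnt_def)
  next
    case (Cons a p) then show ?case by (cases q) auto
  qed
  then show "arr_adj p q \<Longrightarrow> arr_adj q p" by (auto simp: arr_adj_cnt)
qed

lemma cnt_map: "inj_on f (set p \<union> set q) \<Longrightarrow> length p = length q \<Longrightarrow> cnt (map f p) (map f q) = cnt p q"
proof (induction p arbitrary: q)
  case Nil then show ?case by (simp add: cnt_def)
next
  case (Cons a p)
  then obtain b q' where q: "q = b # q'" by (cases q) auto
  have "f a = f b \<longleftrightarrow> a = b" using Cons.prems(1) q by (metis inj_onD list.set_intros(1) UnI1 UnI2)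
  moreover have "inj_on f (set p \<union> set q')" using Cons.prems q by (auto intro: inj_on_subset)
  ultimately show ?case using Cons q by simp
qed

lemma arr_adj_map: "inj_on f (set p \<union> set q) \<Longrightarrow> arr_adj (map f p) (map f q) \<longleftrightarrow> arr_adj p q"
  by (auto simp: arr_adj_cnt cnt_map)

definition FV :: "nat set \<Rightarrow> nat \<Rightarrow> nat list set" where
  "FV T r = {xs. length xs = r \<and> distinct xs \<and> set xs \<subseteq> T}"

definition RV :: "nat set \<Rightarrow> nat \<Rightarrow> nat set \<Rightarrow> nat list set" where
  "RV T r I = {p \<in> FV T r. p!0 \<in> I}"

definition Blk :: "nat set \<Rightarrow> nat \<Rightarrow> nat \<Rightarrow> nat list set" where
  "Blk T r c = {p \<in> FV T r. p!0 = c}"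

lemma card_FV: "finite T \<Longrightarrow> r \<le> card T \<Longrightarrow> card (FV T r) = \<Prod>{card T - r + 1 .. card T}"
  unfolding FV_def by (rule card_lists_distinct_length_eq)

lemma finite_FV: "finite T \<Longrightarrow> finite (FV T r)"
proof -
  assume "finite T"
  have "FV T r \<subseteq> {xs. set xs \<subseteq> T \<and> length xs = r}" by (auto simp: FV_def)
  moreover have "finite {xs. set xs \<subseteq> T \<and> length xs = r}" using \<open>finite T\<close> by (rule finite_lists_length_eq)
  ultimately show ?thesis by (rule finite_subset)
qed

lemma card_FV_ge: assumes "finite T" "1 \<le> r" "r \<le> card T" shows "card T \<le> card (FV T r)"
proof -
  have "card T \<in> {card T - r + 1 .. card T}" using assms by auto
  moreover have "\<forall>x\<in>{card T - r + 1 .. card T}. 1 \<le> x" by auto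
  ultimately have "card T \<le> \<Prod>{card T - r + 1 .. card T}"
    by (intro dvd_imp_le dvd_prodI) (auto intro!: prod_pos)
  then show ?thesis using card_FV assms by simp
qed

lemma FV_ne: assumes "finite T" "r \<le> card T" shows "FV T r \<noteq> {}"
proof -
  have "card (FV T r) > 0" using card_FV[OF assms] by (auto intro!: prod_pos)
  then show ?thesis by auto
qed

lemma avoid2:
  assumes "finite T" "1 \<le> r" "r \<le> card T" "3 \<le> card T"
  shows "\<exists>z\<in>FV T r. z \<noteq> z1 \<and> z \<noteq> z2"
proof (rule ccontr)
  assume "\<not> ?thesis"
  then have "FV T r \<subseteq> {z1, z2}" by auto
  moreover have "card {z1, z2} \<le> 2" by (simp add: card_insert_if)
  ultimately have "card (FV T r) \<le> 2" by (meson card_mono finite.emptyI finite_insert order_trans)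
  then show False using card_FV_ge[OF assms(1-3)] assms(4) by linarith
qed

lemma FV_Cons: "c # z \<in> FV T (Suc r) \<longleftrightarrow> c \<in> T \<and> c \<notin> set z \<and> z \<in> FV T r"
  by (auto simp: FV_def)

lemma FV_Cons2: "c # z \<in> FV T (Suc r) \<longleftrightarrow> c \<in> T \<and> z \<in> FV (T - {c}) r"
  by (auto simp: FV_def)

lemma Blk_eq: assumes "1 \<le> r" shows "Blk T r c = Cons c ` FV (T - {c}) (r - 1) \<inter> {p. c \<in> T}"
proof -
  obtain r' where r: "r = Suc r'" using assms by (cases r) auto
  show ?thesis
  proof (intro set_eqI iffI)
    fix p assume "p \<in> Blk T r c"
    then have "p \<in> FV T r" "p!0 = c" by (auto simp: Blk_def)
    then obtain z where "p = c # z" using r by (cases p) (auto simp: FV_def)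
    then show "p \<in> Cons c ` FV (T - {c}) (r - 1) \<inter> {p. c \<in> T}"
      using \<open>p \<in> FV T r\<close> r FV_Cons2 by auto
  next
    fix p assume "p \<in> Cons c ` FV (T - {c}) (r - 1) \<inter> {p. c \<in> T}"
    then show "p \<in> Blk T r c" using r FV_Cons2 by (auto simp: Blk_def split: if_splits)
  qed
qed

lemma Blk_eq2: "1 \<le> r \<Longrightarrow> c \<in> T \<Longrightarrow> Blk T r c = Cons c ` FV (T - {c}) (r - 1)"
  using Blk_eq by auto

lemma blk_hc2:
  assumes "1 \<le> r" "c \<in> T" "hamiltonian_connected arr_adj (FV (T - {c}) (r - 1))"
  shows "hc2 arr_adj (Blk T r c)"
proof -
  let ?W = "FV (T - {c}) (r - 1)"
  have B: "Blk T r c = Cons c ` ?W" using Blk_eq2 assms by auto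
  have h: "hc2 arr_adj ?W" using hc_hc2 assms(3) by auto
  show ?thesis unfolding hc2_def
  proof (intro ballI impI)
    fix y x assume yx: "y \<in> Blk T r c" "x \<in> Blk T r c" "y \<noteq> x \<or> Blk T r c = {y}"
    obtain y' x' where y': "y = c # y'" "y' \<in> ?W" and x': "x = c # x'" "x' \<in> ?W" using yx B by auto
    have "y' \<noteq> x' \<or> ?W = {y'}" using yx y' x' B by auto
    then obtain Q where Q: "ham_path arr_adj ?W y' x' Q" using h y' x' unfolding hc2_def by blast
    have "ham_path arr_adj (Blk T r c) (Cons c y') (Cons c x') (map (Cons c) Q)"
      by (rule ham_path_iso[OF Q, where \<phi>=tl]) (auto simp: B arr_adj_Cons FV_def)
    then show "\<exists>P. ham_path arr_adj (Blk T r c) y x P" using y' x' by auto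
  qed
qed

lemma RV_union: "1 \<le> r \<Longrightarrow> RV T r I = (\<Union>c\<in>I \<inter> T. Blk T r c)"
proof (intro set_eqI iffI)
  fix p assume "1 \<le> r" "p \<in> RV T r I"
  then have "p!0 \<in> set p" "p \<in> FV T r" "p!0 \<in> I" by (auto simp: RV_def FV_def)
  then show "p \<in> (\<Union>c\<in>I \<inter> T. Blk T r c)" by (auto simp: Blk_def FV_def)
next
  fix p assume "p \<in> (\<Union>c\<in>I \<inter> T. Blk T r c)"
  then show "p \<in> RV T r I" by (auto simp: Blk_def RV_def)
qed

lemma Blk_disj: "c \<noteq> c' \<Longrightarrow> Blk T r c \<inter> Blk T r c' = {}"
  by (auto simp: Blk_def)

lemma gts_blk:
  assumes T: "finite T" and r: "1 \<le> r" "r + 2 \<le> card T" "5 \<le> card T \<or> r = 1"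
    and c: "c \<in> T" "c' \<in> T" "c \<noteq> c'"
  shows "gts arr_adj (Blk T r c) (Blk T r c')"
  unfolding gts_def
proof (intro ballI)
  fix y w assume y: "y \<in> Blk T r c" and w: "w \<in> Blk T r c'"
  show "\<exists>x\<in>Blk T r c. \<exists>x'\<in>Blk T r c'. arr_adj x x' \<and> (x \<noteq> y \<or> Blk T r c = {y}) \<and> (x' \<noteq> w \<or> Blk T r c' = {w})"
  proof (cases "r = 1")
    case True
    have "FV (T - {a}) 0 = {[]}" for a by (auto simp: FV_def)
    then have B: "Blk T r a = {[a]}" if "a \<in> T" for a using Blk_eq2[of r a T] True that by auto
    show ?thesis using B[OF c(1)] B[OF c(2)] y w c by (auto simp: arr_adj_Cons)
  next
    case False
    then have r5: "5 \<le> card T" "2 \<le> r" using r by auto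
    obtain y' where y': "y = c # y'" using y Blk_eq2 r c by auto
    obtain w' where w': "w = c' # w'" using w Blk_eq2 r c by auto
    have cT: "card (T - {c, c'}) = card T - 2" using T c by (simp add: card_Diff_subset)
    have "\<exists>z\<in>FV (T - {c,c'}) (r - 1). z \<noteq> y' \<and> z \<noteq> w'"
      by (rule avoid2) (use T r5 r cT in auto)
    then obtain z where z: "z \<in> FV (T - {c, c'}) (r - 1)" "z \<noteq> y'" "z \<noteq> w'" by blast
    have zc: "z \<in> FV (T - {c}) (r - 1)" "z \<in> FV (T - {c'}) (r - 1)" using z(1) by (auto simp: FV_def)
    have "c # z \<in> Blk T r c" "c' # z \<in> Blk T r c'" using zc Blk_eq2 r c by auto
    moreover have "arr_adj (c # z) (c' # z)" using c by (simp add: arr_adj_Cons)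
    ultimately show ?thesis using z y' w' by blast
  qed
qed

definition swp :: "nat \<Rightarrow> nat list \<Rightarrow> nat list" where
  "swp d p = p[0 := p!d, d := p!0]"

definition sw :: "nat \<Rightarrow> nat \<Rightarrow> nat" where
  "sw d j = (if j = d then 0 else if j = 0 then d else j)"

lemma swp_nth: "j < length p \<Longrightarrow> d < length p \<Longrightarrow> swp d p ! j = p ! sw d j"
  by (auto simp: swp_def sw_def nth_list_update)

lemma swp_length[simp]: "length (swp d p) = length p"
  by (simp add: swp_def)

lemma swp_set: "d < length p \<Longrightarrow> 0 < length p \<Longrightarrow> set (swp d p) = set p"
  by (simp add: swp_def)

lemma swp_FV: "p \<in> FV T r \<Longrightarrow> d < r \<Longrightarrow> swp d p \<in> FV T r"
  by (auto simp: FV_def swp_def)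

lemma sw_inv: "sw d (sw d j) = j" by (auto simp: sw_def)

lemma sw_less: "d < n \<Longrightarrow> j < n \<Longrightarrow> sw d j < n" by (auto simp: sw_def)

lemma swp_swp: assumes "d < length p" shows "swp d (swp d p) = p"
proof (rule nth_equalityI)
  show "length (swp d (swp d p)) = length p" by simp
  fix j assume "j < length (swp d (swp d p))"
  then have j: "j < length p" by simp
  have "swp d (swp d p) ! j = swp d p ! sw d j" using j assms by (simp add: swp_nth)
  also have "\<dots> = p ! sw d (sw d j)" using j assms sw_less by (simp add: swp_nth)
  finally show "swp d (swp d p) ! j = p ! j" by (simp add: sw_inv)
qed

lemma swp_0: assumes "d < length p" shows "swp d p ! 0 = p ! d"
proof -
  have "0 < length p" using assms by (rule order.strict_trans1[rotated]) simp
  then show ?thesis using assms by (simp add: swp_nth sw_def)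
qed

lemma swp_adj:
  assumes "d < length p" "length p = length q"
  shows "arr_adj (swp d p) (swp d q) \<longleftrightarrow> arr_adj p q"
proof -
  let ?S = "{j. j < length p \<and> p!j \<noteq> q!j}"
  have "{j. j < length (swp d p) \<and> swp d p!j \<noteq> swp d q!j} = sw d ` ?S"
  proof (intro set_eqI iffI)
    fix j assume "j \<in> {j. j < length (swp d p) \<and> swp d p!j \<noteq> swp d q!j}"
    then have "j < length p" "p ! sw d j \<noteq> q ! sw d j" using assms by (auto simp: swp_nth)
    moreover have "sw d j < length p" using \<open>j < length p\<close> assms by (auto simp: sw_def)
    ultimately show "j \<in> sw d ` ?S" by (metis (mono_tags, lifting) image_eqI mem_Collect_eq sw_inv)
  next
    fix j assume "j \<in> sw d ` ?S"
    then obtain i where i: "i < length p" "p!i \<noteq> q!i" "j = sw d i" by auto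
    have "j < length p" using i assms sw_less by simp
    moreover have "swp d p ! j = p ! i" "swp d q ! j = q ! i"
      using i \<open>j < length p\<close> assms by (simp_all add: swp_nth sw_inv)
    ultimately show "j \<in> {j. j < length (swp d p) \<and> swp d p!j \<noteq> swp d q!j}"
      using i by simp
  qed
  moreover have "inj (sw d)" by (metis inj_on_inverseI sw_inv)
  ultimately have "card {j. j < length (swp d p) \<and> swp d p!j \<noteq> swp d q!j} = card ?S"
    by (simp add: card_image inj_on_subset)
  then show ?thesis using assms unfolding arr_adj_def by simp
qed

lemma diff_pos: "length u = length v \<Longrightarrow> u \<noteq> v \<Longrightarrow> \<exists>d<length u. u!d \<noteq> v!d"
  using nth_equalityI by blast




definition gp :: "nat \<Rightarrow> nat list list \<Rightarrow> bool" where
  "gp e P \<longleftrightarrow> (\<exists>j. Suc j < length P \<and> e \<notin> set (P!j) \<and> e \<notin> set (P!Suc j))"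


definition adjc :: "nat list \<Rightarrow> nat list \<Rightarrow> bool" where
  "adjc p q \<longleftrightarrow> length p = length q \<and> length (filter (\<lambda>(a,b). a \<noteq> b) (zip p q)) = 1"

definition L42 :: "nat list list" where
  "L42 = [[0,1],[0,2],[0,3],[1,0],[1,2],[1,3],[2,0],[2,1],[2,3],[3,0],[3,1],[3,2]]"

definition gpc :: "nat \<Rightarrow> nat list list \<Rightarrow> bool" where
  "gpc e P \<longleftrightarrow> list_ex (\<lambda>(a,b). e \<notin> set a \<and> e \<notin> set b) (zip P (tl P))"

definition chk :: "nat list \<Rightarrow> nat list \<Rightarrow> nat list list \<Rightarrow> bool" where
  "chk u v P \<longleftrightarrow> P \<noteq> [] \<and> hd P = u \<and> last P = v \<and> distinct P \<and> list_all (\<lambda>x. x \<in> set L42) P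
     \<and> list_all (\<lambda>x. x \<in> set P) L42 \<and> list_all (\<lambda>(a,b). adjc a b) (zip P (tl P))
     \<and> list_all (\<lambda>e. gpc e P) [0,1,2,3]"

definition tbl42 :: "((nat list \<times> nat list) \<times> nat list list) list" where
 "tbl42 = [(([0,1],[0,2]),[[0,1],[0,3],[1,3],[1,0],[2,0],[2,3],[2,1],[3,1],[3,0],[3,2],[1,2],[0,2]]),
 (([0,1],[0,3]),[[0,1],[0,2],[1,2],[1,0],[2,0],[3,0],[3,2],[3,1],[2,1],[2,3],[1,3],[0,3]]),
 (([0,1],[1,0]),[[0,1],[0,2],[0,3],[1,3],[1,2],[3,2],[3,0],[3,1],[2,1],[2,3],[2,0],[1,0]]),
 (([0,1],[1,2]),[[0,1],[0,2],[0,3],[1,3],[1,0],[2,0],[2,3],[2,1],[3,1],[3,0],[3,2],[1,2]]),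
 (([0,1],[1,3]),[[0,1],[0,2],[0,3],[2,3],[2,0],[2,1],[3,1],[3,0],[3,2],[1,2],[1,0],[1,3]]),
 (([0,1],[2,0]),[[0,1],[0,2],[0,3],[1,3],[1,0],[1,2],[3,2],[3,0],[3,1],[2,1],[2,3],[2,0]]),
 (([0,1],[2,1]),[[0,1],[0,2],[0,3],[1,3],[1,0],[1,2],[3,2],[3,1],[3,0],[2,0],[2,3],[2,1]]),
 (([0,1],[2,3]),[[0,1],[0,2],[0,3],[1,3],[1,0],[1,2],[3,2],[3,0],[3,1],[2,1],[2,0],[2,3]]),
 (([0,1],[3,0]),[[0,1],[0,2],[0,3],[1,3],[1,0],[1,2],[3,2],[3,1],[2,1],[2,3],[2,0],[3,0]]),
 (([0,1],[3,1]),[[0,1],[0,2],[0,3],[1,3],[1,0],[1,2],[3,2],[3,0],[2,0],[2,3],[2,1],[3,1]]),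
 (([0,1],[3,2]),[[0,1],[0,2],[0,3],[1,3],[1,2],[1,0],[2,0],[2,3],[2,1],[3,1],[3,0],[3,2]]),
 (([0,2],[0,1]),[[0,2],[0,3],[1,3],[1,0],[1,2],[3,2],[3,0],[2,0],[2,3],[2,1],[3,1],[0,1]]),
 (([0,2],[0,3]),[[0,2],[0,1],[2,1],[2,0],[1,0],[3,0],[3,1],[3,2],[1,2],[1,3],[2,3],[0,3]]),
 (([0,2],[1,0]),[[0,2],[0,1],[0,3],[1,3],[1,2],[3,2],[3,0],[3,1],[2,1],[2,3],[2,0],[1,0]]),
 (([0,2],[1,2]),[[0,2],[0,1],[0,3],[1,3],[1,0],[2,0],[2,3],[2,1],[3,1],[3,0],[3,2],[1,2]]),
 (([0,2],[1,3]),[[0,2],[0,1],[0,3],[2,3],[2,0],[2,1],[3,1],[3,0],[3,2],[1,2],[1,0],[1,3]]),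
 (([0,2],[2,0]),[[0,2],[0,1],[0,3],[1,3],[1,0],[1,2],[3,2],[3,0],[3,1],[2,1],[2,3],[2,0]]),
 (([0,2],[2,1]),[[0,2],[0,1],[0,3],[1,3],[1,0],[1,2],[3,2],[3,1],[3,0],[2,0],[2,3],[2,1]]),
 (([0,2],[2,3]),[[0,2],[0,1],[0,3],[1,3],[1,0],[1,2],[3,2],[3,0],[3,1],[2,1],[2,0],[2,3]]),
 (([0,2],[3,0]),[[0,2],[0,1],[0,3],[1,3],[1,0],[1,2],[3,2],[3,1],[2,1],[2,3],[2,0],[3,0]]),
 (([0,2],[3,1]),[[0,2],[0,1],[0,3],[1,3],[1,0],[1,2],[3,2],[3,0],[2,0],[2,3],[2,1],[3,1]]),
 (([0,2],[3,2]),[[0,2],[0,1],[0,3],[1,3],[1,2],[1,0],[2,0],[2,3],[2,1],[3,1],[3,0],[3,2]]),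
 (([0,3],[0,1]),[[0,3],[0,2],[1,2],[1,0],[1,3],[2,3],[2,0],[3,0],[3,2],[3,1],[2,1],[0,1]]),
 (([0,3],[0,2]),[[0,3],[0,1],[2,1],[2,0],[2,3],[1,3],[1,0],[3,0],[3,1],[3,2],[1,2],[0,2]]),
 (([0,3],[1,0]),[[0,3],[0,1],[0,2],[1,2],[1,3],[2,3],[2,0],[2,1],[3,1],[3,2],[3,0],[1,0]]),
 (([0,3],[1,2]),[[0,3],[0,1],[0,2],[3,2],[3,0],[3,1],[2,1],[2,0],[2,3],[1,3],[1,0],[1,2]]),
 (([0,3],[1,3]),[[0,3],[0,1],[0,2],[1,2],[1,0],[2,0],[3,0],[3,2],[3,1],[2,1],[2,3],[1,3]]),
 (([0,3],[2,0]),[[0,3],[0,1],[0,2],[1,2],[1,0],[1,3],[2,3],[2,1],[3,1],[3,2],[3,0],[2,0]]),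
 (([0,3],[2,1]),[[0,3],[0,1],[0,2],[1,2],[1,0],[1,3],[2,3],[2,0],[3,0],[3,2],[3,1],[2,1]]),
 (([0,3],[2,3]),[[0,3],[0,1],[0,2],[1,2],[1,3],[1,0],[2,0],[3,0],[3,2],[3,1],[2,1],[2,3]]),
 (([0,3],[3,0]),[[0,3],[0,1],[0,2],[1,2],[1,0],[1,3],[2,3],[2,0],[2,1],[3,1],[3,2],[3,0]]),
 (([0,3],[3,1]),[[0,3],[0,1],[0,2],[1,2],[1,0],[1,3],[2,3],[2,1],[2,0],[3,0],[3,2],[3,1]]),
 (([0,3],[3,2]),[[0,3],[0,1],[0,2],[1,2],[1,0],[1,3],[2,3],[2,0],[2,1],[3,1],[3,0],[3,2]]),
 (([1,0],[0,1]),[[1,0],[1,2],[0,2],[0,3],[1,3],[2,3],[2,0],[3,0],[3,2],[3,1],[2,1],[0,1]]),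
 (([1,0],[0,2]),[[1,0],[1,2],[1,3],[0,3],[0,1],[2,1],[2,3],[2,0],[3,0],[3,1],[3,2],[0,2]]),
 (([1,0],[0,3]),[[1,0],[1,2],[0,2],[0,1],[2,1],[3,1],[3,2],[3,0],[2,0],[2,3],[1,3],[0,3]]),
 (([1,0],[1,2]),[[1,0],[1,3],[0,3],[0,1],[2,1],[2,3],[2,0],[3,0],[3,1],[3,2],[0,2],[1,2]]),
 (([1,0],[1,3]),[[1,0],[1,2],[0,2],[0,1],[2,1],[3,1],[3,2],[3,0],[2,0],[2,3],[0,3],[1,3]]),
 (([1,0],[2,0]),[[1,0],[1,2],[0,2],[0,1],[0,3],[1,3],[2,3],[2,1],[3,1],[3,2],[3,0],[2,0]]),
 (([1,0],[2,1]),[[1,0],[1,2],[0,2],[0,1],[0,3],[1,3],[2,3],[2,0],[3,0],[3,2],[3,1],[2,1]]),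
 (([1,0],[2,3]),[[1,0],[1,2],[0,2],[3,2],[3,0],[2,0],[2,1],[3,1],[0,1],[0,3],[1,3],[2,3]]),
 (([1,0],[3,0]),[[1,0],[1,2],[0,2],[0,1],[0,3],[1,3],[2,3],[2,0],[2,1],[3,1],[3,2],[3,0]]),
 (([1,0],[3,1]),[[1,0],[1,2],[0,2],[0,1],[0,3],[1,3],[2,3],[2,1],[2,0],[3,0],[3,2],[3,1]]),
 (([1,0],[3,2]),[[1,0],[1,2],[0,2],[0,1],[0,3],[1,3],[2,3],[2,0],[2,1],[3,1],[3,0],[3,2]]),
 (([1,2],[0,1]),[[1,2],[0,2],[0,3],[1,3],[2,3],[2,0],[1,0],[3,0],[3,2],[3,1],[2,1],[0,1]]),
 (([1,2],[0,2]),[[1,2],[1,0],[1,3],[0,3],[0,1],[2,1],[2,3],[2,0],[3,0],[3,1],[3,2],[0,2]]),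
 (([1,2],[0,3]),[[1,2],[0,2],[0,1],[2,1],[3,1],[3,2],[3,0],[1,0],[2,0],[2,3],[1,3],[0,3]]),
 (([1,2],[1,0]),[[1,2],[0,2],[0,1],[0,3],[1,3],[2,3],[2,0],[2,1],[3,1],[3,2],[3,0],[1,0]]),
 (([1,2],[1,3]),[[1,2],[0,2],[0,1],[0,3],[2,3],[2,0],[2,1],[3,1],[3,2],[3,0],[1,0],[1,3]]),
 (([1,2],[2,0]),[[1,2],[0,2],[0,1],[0,3],[1,3],[1,0],[3,0],[3,2],[3,1],[2,1],[2,3],[2,0]]),
 (([1,2],[2,1]),[[1,2],[0,2],[0,1],[0,3],[1,3],[2,3],[2,0],[1,0],[3,0],[3,2],[3,1],[2,1]]),
 (([1,2],[2,3]),[[1,2],[0,2],[0,1],[0,3],[1,3],[1,0],[2,0],[3,0],[3,2],[3,1],[2,1],[2,3]]),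
 (([1,2],[3,0]),[[1,2],[0,2],[0,1],[0,3],[1,3],[1,0],[2,0],[2,3],[2,1],[3,1],[3,2],[3,0]]),
 (([1,2],[3,1]),[[1,2],[0,2],[0,1],[0,3],[1,3],[2,3],[2,1],[2,0],[1,0],[3,0],[3,2],[3,1]]),
 (([1,2],[3,2]),[[1,2],[0,2],[0,1],[0,3],[1,3],[1,0],[2,0],[2,3],[2,1],[3,1],[3,0],[3,2]]),
 (([1,3],[0,1]),[[1,3],[0,3],[0,2],[1,2],[3,2],[3,0],[1,0],[2,0],[2,3],[2,1],[3,1],[0,1]]),
 (([1,3],[0,2]),[[1,3],[0,3],[0,1],[2,1],[2,3],[2,0],[1,0],[3,0],[3,1],[3,2],[1,2],[0,2]]),
 (([1,3],[0,3]),[[1,3],[1,0],[1,2],[0,2],[0,1],[2,1],[3,1],[3,2],[3,0],[2,0],[2,3],[0,3]]),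
 (([1,3],[1,0]),[[1,3],[0,3],[0,1],[0,2],[1,2],[3,2],[3,0],[3,1],[2,1],[2,3],[2,0],[1,0]]),
 (([1,3],[1,2]),[[1,3],[0,3],[0,1],[0,2],[3,2],[3,0],[3,1],[2,1],[2,3],[2,0],[1,0],[1,2]]),
 (([1,3],[2,0]),[[1,3],[0,3],[0,1],[0,2],[1,2],[1,0],[3,0],[3,2],[3,1],[2,1],[2,3],[2,0]]),
 (([1,3],[2,1]),[[1,3],[0,3],[0,1],[0,2],[1,2],[3,2],[3,1],[3,0],[1,0],[2,0],[2,3],[2,1]]),
 (([1,3],[2,3]),[[1,3],[0,3],[0,1],[0,2],[1,2],[1,0],[2,0],[3,0],[3,2],[3,1],[2,1],[2,3]]),
 (([1,3],[3,0]),[[1,3],[0,3],[0,1],[0,2],[1,2],[1,0],[2,0],[2,3],[2,1],[3,1],[3,2],[3,0]]),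
 (([1,3],[3,1]),[[1,3],[0,3],[0,1],[0,2],[1,2],[3,2],[3,0],[1,0],[2,0],[2,3],[2,1],[3,1]]),
 (([1,3],[3,2]),[[1,3],[0,3],[0,1],[0,2],[1,2],[1,0],[2,0],[2,3],[2,1],[3,1],[3,0],[3,2]]),
 (([2,0],[0,1]),[[2,0],[1,0],[1,2],[0,2],[3,2],[3,0],[3,1],[2,1],[2,3],[1,3],[0,3],[0,1]]),
 (([2,0],[0,2]),[[2,0],[1,0],[1,2],[1,3],[0,3],[2,3],[2,1],[0,1],[3,1],[3,0],[3,2],[0,2]]),
 (([2,0],[0,3]),[[2,0],[1,0],[1,2],[0,2],[3,2],[3,0],[3,1],[0,1],[2,1],[2,3],[1,3],[0,3]]),
 (([2,0],[1,0]),[[2,0],[2,1],[0,1],[0,2],[0,3],[2,3],[1,3],[1,2],[3,2],[3,1],[3,0],[1,0]]),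
 (([2,0],[1,2]),[[2,0],[1,0],[1,3],[0,3],[2,3],[2,1],[0,1],[3,1],[3,0],[3,2],[0,2],[1,2]]),
 (([2,0],[1,3]),[[2,0],[1,0],[1,2],[0,2],[3,2],[3,0],[3,1],[0,1],[2,1],[2,3],[0,3],[1,3]]),
 (([2,0],[2,1]),[[2,0],[1,0],[1,2],[0,2],[3,2],[3,0],[3,1],[0,1],[0,3],[1,3],[2,3],[2,1]]),
 (([2,0],[2,3]),[[2,0],[1,0],[1,2],[0,2],[3,2],[3,0],[3,1],[2,1],[0,1],[0,3],[1,3],[2,3]]),
 (([2,0],[3,0]),[[2,0],[1,0],[1,2],[0,2],[0,1],[0,3],[1,3],[2,3],[2,1],[3,1],[3,2],[3,0]]),
 (([2,0],[3,1]),[[2,0],[1,0],[1,2],[1,3],[0,3],[2,3],[2,1],[0,1],[0,2],[3,2],[3,0],[3,1]]),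
 (([2,0],[3,2]),[[2,0],[1,0],[1,2],[0,2],[0,1],[0,3],[1,3],[2,3],[2,1],[3,1],[3,0],[3,2]]),
 (([2,1],[0,1]),[[2,1],[2,0],[1,0],[1,2],[1,3],[2,3],[0,3],[0,2],[3,2],[3,0],[3,1],[0,1]]),
 (([2,1],[0,2]),[[2,1],[0,1],[0,3],[1,3],[2,3],[2,0],[1,0],[3,0],[3,1],[3,2],[1,2],[0,2]]),
 (([2,1],[0,3]),[[2,1],[0,1],[0,2],[1,2],[3,2],[3,1],[3,0],[1,0],[2,0],[2,3],[1,3],[0,3]]),
 (([2,1],[1,0]),[[2,1],[0,1],[0,2],[0,3],[1,3],[2,3],[2,0],[3,0],[3,1],[3,2],[1,2],[1,0]]),
 (([2,1],[1,2]),[[2,1],[0,1],[0,2],[0,3],[1,3],[2,3],[2,0],[1,0],[3,0],[3,1],[3,2],[1,2]]),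
 (([2,1],[1,3]),[[2,1],[0,1],[0,2],[0,3],[2,3],[2,0],[1,0],[3,0],[3,1],[3,2],[1,2],[1,3]]),
 (([2,1],[2,0]),[[2,1],[0,1],[0,2],[0,3],[2,3],[1,3],[1,0],[1,2],[3,2],[3,1],[3,0],[2,0]]),
 (([2,1],[2,3]),[[2,1],[0,1],[0,2],[0,3],[1,3],[1,0],[1,2],[3,2],[3,1],[3,0],[2,0],[2,3]]),
 (([2,1],[3,0]),[[2,1],[0,1],[0,2],[0,3],[1,3],[2,3],[2,0],[1,0],[1,2],[3,2],[3,1],[3,0]]),
 (([2,1],[3,1]),[[2,1],[0,1],[0,2],[0,3],[1,3],[2,3],[2,0],[1,0],[1,2],[3,2],[3,0],[3,1]]),
 (([2,1],[3,2]),[[2,1],[0,1],[0,2],[0,3],[2,3],[1,3],[1,2],[1,0],[2,0],[3,0],[3,1],[3,2]]),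
 (([2,3],[0,1]),[[2,3],[0,3],[0,2],[1,2],[1,3],[1,0],[2,0],[3,0],[3,2],[3,1],[2,1],[0,1]]),
 (([2,3],[0,2]),[[2,3],[0,3],[0,1],[2,1],[3,1],[3,0],[2,0],[1,0],[1,3],[1,2],[3,2],[0,2]]),
 (([2,3],[0,3]),[[2,3],[1,3],[1,0],[1,2],[0,2],[3,2],[3,0],[2,0],[2,1],[3,1],[0,1],[0,3]]),
 (([2,3],[1,0]),[[2,3],[0,3],[0,1],[2,1],[2,0],[3,0],[3,1],[3,2],[0,2],[1,2],[1,3],[1,0]]),
 (([2,3],[1,2]),[[2,3],[0,3],[0,1],[0,2],[3,2],[3,0],[3,1],[2,1],[2,0],[1,0],[1,3],[1,2]]),
 (([2,3],[1,3]),[[2,3],[0,3],[0,1],[0,2],[1,2],[3,2],[3,0],[3,1],[2,1],[2,0],[1,0],[1,3]]),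
 (([2,3],[2,0]),[[2,3],[0,3],[0,1],[0,2],[1,2],[1,3],[1,0],[3,0],[3,2],[3,1],[2,1],[2,0]]),
 (([2,3],[2,1]),[[2,3],[0,3],[0,1],[0,2],[1,2],[1,3],[1,0],[2,0],[3,0],[3,2],[3,1],[2,1]]),
 (([2,3],[3,0]),[[2,3],[0,3],[0,1],[0,2],[1,2],[1,3],[1,0],[2,0],[2,1],[3,1],[3,2],[3,0]]),
 (([2,3],[3,1]),[[2,3],[0,3],[0,1],[0,2],[3,2],[1,2],[1,3],[1,0],[3,0],[2,0],[2,1],[3,1]]),
 (([2,3],[3,2]),[[2,3],[0,3],[0,1],[0,2],[1,2],[1,3],[1,0],[2,0],[2,1],[3,1],[3,0],[3,2]]),
 (([3,0],[0,1]),[[3,0],[1,0],[1,2],[0,2],[3,2],[3,1],[2,1],[2,0],[2,3],[1,3],[0,3],[0,1]]),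
 (([3,0],[0,2]),[[3,0],[1,0],[1,2],[1,3],[0,3],[2,3],[2,0],[2,1],[0,1],[3,1],[3,2],[0,2]]),
 (([3,0],[0,3]),[[3,0],[1,0],[1,2],[0,2],[3,2],[3,1],[0,1],[2,1],[2,0],[2,3],[1,3],[0,3]]),
 (([3,0],[1,0]),[[3,0],[2,0],[2,1],[0,1],[3,1],[3,2],[0,2],[0,3],[2,3],[1,3],[1,2],[1,0]]),
 (([3,0],[1,2]),[[3,0],[1,0],[1,3],[0,3],[2,3],[2,0],[2,1],[0,1],[3,1],[3,2],[0,2],[1,2]]),
 (([3,0],[1,3]),[[3,0],[1,0],[1,2],[0,2],[3,2],[3,1],[0,1],[2,1],[2,0],[2,3],[0,3],[1,3]]),
 (([3,0],[2,0]),[[3,0],[1,0],[1,2],[0,2],[3,2],[3,1],[0,1],[0,3],[1,3],[2,3],[2,1],[2,0]]),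
 (([3,0],[2,1]),[[3,0],[1,0],[1,2],[0,2],[3,2],[3,1],[0,1],[0,3],[1,3],[2,3],[2,0],[2,1]]),
 (([3,0],[2,3]),[[3,0],[1,0],[1,2],[1,3],[0,3],[0,1],[0,2],[3,2],[3,1],[2,1],[2,0],[2,3]]),
 (([3,0],[3,1]),[[3,0],[1,0],[1,2],[1,3],[0,3],[2,3],[2,0],[2,1],[0,1],[0,2],[3,2],[3,1]]),
 (([3,0],[3,2]),[[3,0],[1,0],[1,2],[0,2],[0,1],[0,3],[1,3],[2,3],[2,0],[2,1],[3,1],[3,2]]),
 (([3,1],[0,1]),[[3,1],[2,1],[2,0],[1,0],[3,0],[3,2],[0,2],[1,2],[1,3],[2,3],[0,3],[0,1]]),
 (([3,1],[0,2]),[[3,1],[0,1],[0,3],[1,3],[2,3],[2,1],[2,0],[1,0],[3,0],[3,2],[1,2],[0,2]]),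
 (([3,1],[0,3]),[[3,1],[0,1],[0,2],[1,2],[3,2],[3,0],[1,0],[2,0],[2,1],[2,3],[1,3],[0,3]]),
 (([3,1],[1,0]),[[3,1],[0,1],[0,2],[0,3],[1,3],[2,3],[2,1],[2,0],[3,0],[3,2],[1,2],[1,0]]),
 (([3,1],[1,2]),[[3,1],[0,1],[0,2],[0,3],[1,3],[2,3],[2,1],[2,0],[1,0],[3,0],[3,2],[1,2]]),
 (([3,1],[1,3]),[[3,1],[0,1],[0,2],[0,3],[2,3],[2,1],[2,0],[1,0],[3,0],[3,2],[1,2],[1,3]]),
 (([3,1],[2,0]),[[3,1],[0,1],[0,2],[1,2],[3,2],[3,0],[1,0],[1,3],[0,3],[2,3],[2,1],[2,0]]),
 (([3,1],[2,1]),[[3,1],[0,1],[0,2],[0,3],[1,3],[1,0],[1,2],[3,2],[3,0],[2,0],[2,3],[2,1]]),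
 (([3,1],[2,3]),[[3,1],[0,1],[0,2],[0,3],[1,3],[1,0],[1,2],[3,2],[3,0],[2,0],[2,1],[2,3]]),
 (([3,1],[3,0]),[[3,1],[0,1],[0,2],[0,3],[1,3],[2,3],[2,1],[2,0],[1,0],[1,2],[3,2],[3,0]]),
 (([3,1],[3,2]),[[3,1],[0,1],[0,2],[0,3],[1,3],[2,3],[2,1],[2,0],[3,0],[1,0],[1,2],[3,2]]),
 (([3,2],[0,1]),[[3,2],[0,2],[0,3],[1,3],[1,2],[1,0],[3,0],[2,0],[2,3],[2,1],[3,1],[0,1]]),
 (([3,2],[0,2]),[[3,2],[1,2],[1,0],[1,3],[0,3],[2,3],[2,0],[3,0],[3,1],[2,1],[0,1],[0,2]]),
 (([3,2],[0,3]),[[3,2],[0,2],[0,1],[2,1],[3,1],[3,0],[2,0],[1,0],[1,2],[1,3],[2,3],[0,3]]),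
 (([3,2],[1,0]),[[3,2],[0,2],[0,1],[2,1],[3,1],[3,0],[2,0],[2,3],[0,3],[1,3],[1,2],[1,0]]),
 (([3,2],[1,2]),[[3,2],[0,2],[0,1],[0,3],[1,3],[2,3],[2,0],[2,1],[3,1],[3,0],[1,0],[1,2]]),
 (([3,2],[1,3]),[[3,2],[0,2],[0,1],[0,3],[2,3],[2,0],[2,1],[3,1],[3,0],[1,0],[1,2],[1,3]]),
 (([3,2],[2,0]),[[3,2],[0,2],[0,1],[0,3],[1,3],[1,2],[1,0],[3,0],[3,1],[2,1],[2,3],[2,0]]),
 (([3,2],[2,1]),[[3,2],[0,2],[0,1],[0,3],[2,3],[1,3],[1,2],[1,0],[2,0],[3,0],[3,1],[2,1]]),
 (([3,2],[2,3]),[[3,2],[0,2],[0,1],[0,3],[1,3],[1,2],[1,0],[2,0],[3,0],[3,1],[2,1],[2,3]]),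
 (([3,2],[3,0]),[[3,2],[0,2],[0,1],[0,3],[1,3],[1,2],[1,0],[2,0],[2,3],[2,1],[3,1],[3,0]]),
 (([3,2],[3,1]),[[3,2],[0,2],[0,1],[0,3],[1,3],[1,2],[1,0],[3,0],[2,0],[2,3],[2,1],[3,1]])]"

lemma conc42a: "list_all (\<lambda>((u,v),P). chk u v P) tbl42"
  by code_simp

lemma conc42b: "map fst tbl42 = [(u,v). u \<leftarrow> L42, v \<leftarrow> L42, u \<noteq> v]"
  by code_simp

lemma zip_tl_nth: "Suc j < length P \<Longrightarrow> zip P (tl P) ! j = (P!j, P!Suc j)"
  by (cases P) auto

lemma chk_ham:
  assumes "chk u v P"
  shows "ham_path arr_adj (set L42) u v P \<and> (\<forall>e<4. gp e P)"
proof -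
  have a: "P \<noteq> []" "hd P = u" "last P = v" "distinct P" "list_all (\<lambda>x. x \<in> set L42) P"
     "list_all (\<lambda>x. x \<in> set P) L42" "list_all (\<lambda>(a,b). adjc a b) (zip P (tl P))"
     "list_all (\<lambda>e. gpc e P) [0,1,2,3]"
    using assms unfolding chk_def by auto
  have "set P = set L42" using a(5,6) by (auto simp: list_all_iff)
  moreover have "pth arr_adj P" unfolding pth_def
  proof (intro allI impI)
    fix j assume j: "Suc j < length P"
    then have "j < length (zip P (tl P))" by simp
    then have "zip P (tl P) ! j \<in> set (zip P (tl P))" by (rule nth_mem)
    then have "adjc (P!j) (P!Suc j)" using a(7) zip_tl_nth[OF j] by (auto simp: list_all_iff)
    then show "arr_adj (P!j) (P!Suc j)" by (simp add: adjc_def arr_adj_cnt cnt_def)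
  qed
  moreover have "gp e P" if "e < 4" for e
  proof -
    have "e \<in> set [0,1,2,3]" using that by auto
    then have "gpc e P" using a(8) by (auto simp: list_all_iff)
    then obtain ab where ab: "ab \<in> set (zip P (tl P))" "e \<notin> set (fst ab)" "e \<notin> set (snd ab)"
      by (auto simp: gpc_def list_ex_iff)
    then obtain j where j: "j < length (zip P (tl P))" "ab = zip P (tl P) ! j" by (auto simp: in_set_conv_nth)
    then have "Suc j < length P" by simp
    then show ?thesis using ab j zip_tl_nth unfolding gp_def by (metis fst_conv snd_conv)
  qed
  ultimately show ?thesis using a by (simp add: ham_path_pth)
qed

lemma conc:
  assumes "u \<in> set L42" "v \<in> set L42" "u \<noteq> v"
  shows "\<exists>P. ham_path arr_adj (set L42) u v P \<and> (\<forall>e<4. gp e P)"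
proof -
  have "(u,v) \<in> set (map fst tbl42)" unfolding conc42b using assms by auto
  then obtain P where "((u,v),P) \<in> set tbl42" by auto
  then have "chk u v P" using conc42a by (auto simp: list_all_iff)
  then show ?thesis using chk_ham by blast
qed

lemma FV42: "FV {0..<4} 2 = set L42"
proof (intro set_eqI iffI)
  fix p assume "p \<in> FV {0..<4} 2"
  then obtain a b where p: "p = [a,b]" "a \<noteq> b" "a < 4" "b < 4" by (auto simp: FV_def numeral_2_eq_2 length_Suc_conv)
  then have "a \<in> {0,1,2,3}" "b \<in> {0,1,2,3}" by auto
  then show "p \<in> set L42" using p by (auto simp: L42_def)
next
  fix p assume "p \<in> set L42"
  then show "p \<in> FV {0..<4} 2" by (auto simp: L42_def FV_def)
qed

lemma F42:
  assumes T: "finite T" "card T = 4" and u: "u \<in> FV T 2" and v: "v \<in> FV T 2" and uv: "u \<noteq> v"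
  shows "\<exists>P. ham_path arr_adj (FV T 2) u v P \<and> (\<forall>e\<in>T. gp e P)"
proof -
  obtain f where f: "bij_betw f T {0..<4::nat}" using ex_bij_betw_finite_nat[OF T(1)] T(2) by auto
  define g where "g = inv_into T f"
  have g: "bij_betw g {0..<4} T" using f by (simp add: g_def bij_betw_inv_into)
  have fg: "\<forall>x\<in>{0..<4}. f (g x) = x" using f by (simp add: g_def bij_betw_inv_into_right)
  have gf: "\<forall>x\<in>T. g (f x) = x" using f by (simp add: g_def bij_betw_inv_into_left)
  have injf: "inj_on f T" and injg: "inj_on g {0..<4}" using f g by (auto simp: bij_betw_def)
  have fT: "\<forall>x\<in>T. f x \<in> {0..<4}" and gT: "\<forall>x\<in>{0..<4}. g x \<in> T"
    using f g by (auto simp: bij_betw_def)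
  let ?W = "FV {0..<4} 2"
  have phi: "\<forall>x\<in>FV T 2. map f x \<in> ?W \<and> map g (map f x) = x"
  proof
    fix x assume x: "x \<in> FV T 2"
    then have "inj_on f (set x)" using injf by (auto simp: FV_def intro: inj_on_subset)
    then show "map f x \<in> ?W \<and> map g (map f x) = x" using x fT gf
      by (auto simp: FV_def distinct_map map_idI subset_iff)
  qed
  have psi: "\<forall>x\<in>?W. map g x \<in> FV T 2"
  proof
    fix x assume x: "x \<in> ?W"
    then have "inj_on g (set x)" using injg by (auto simp: FV_def intro: inj_on_subset)
    then show "map g x \<in> FV T 2" using x gT by (auto simp: FV_def distinct_map)
  qed
  have psi2: "\<forall>x\<in>?W. map f (map g x) = x"
  proof
    fix x assume "x \<in> ?W"
    then have "\<forall>a\<in>set x. f (g a) = a" using fg by (auto simp: FV_def)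
    then show "map f (map g x) = x" by (induction x) auto
  qed
  have ad: "\<forall>x\<in>?W. \<forall>y\<in>?W. arr_adj x y \<longrightarrow> arr_adj (map g x) (map g y)"
  proof (intro ballI impI)
    fix x y assume "x \<in> ?W" "y \<in> ?W" "arr_adj x y"
    moreover have "inj_on g (set x \<union> set y)" using injg \<open>x \<in> ?W\<close> \<open>y \<in> ?W\<close>
      by (auto simp: FV_def intro: inj_on_subset)
    ultimately show "arr_adj (map g x) (map g y)" by (simp add: arr_adj_map)
  qed
  have "map f u \<noteq> map f v" using phi u v uv by metis
  then obtain Q where Q: "ham_path arr_adj ?W (map f u) (map f v) Q" "\<forall>e<4. gp e Q"
    using conc[of "map f u" "map f v"] phi u v FV42 by auto
  have H: "ham_path arr_adj (FV T 2) (map g (map f u)) (map g (map f v)) (map (map g) Q)"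
    by (rule ham_path_iso[OF Q(1), where \<phi>="map f"]) (use phi psi psi2 ad in auto)
  have G: "gp e (map (map g) Q)" if e: "e \<in> T" for e
  proof -
    have "gp (f e) Q" using Q(2) fT e by auto
    then obtain j where j: "Suc j < length Q" "f e \<notin> set (Q!j)" "f e \<notin> set (Q!Suc j)" by (auto simp: gp_def)
    have sQ: "set Q = ?W" using Q(1) by (simp add: ham_path_pth)
    have "Q!j \<in> ?W" "Q!Suc j \<in> ?W" using j(1) sQ by (metis Suc_lessD nth_mem)+
    have nb: "e \<notin> set (map g z)" if "z \<in> ?W" "f e \<notin> set z" for z
    proof
      assume "e \<in> set (map g z)"
      then obtain a where a: "a \<in> set z" "e = g a" by auto
      then have "a \<in> {0..<4}" using that by (auto simp: FV_def)
      then have "f e = a" using a fg by auto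
      then show False using a that by auto
    qed
    show ?thesis unfolding gp_def using j nb \<open>Q!j \<in> ?W\<close> \<open>Q!Suc j \<in> ?W\<close>
      by (intro exI[of _ j]) auto
  qed
  show ?thesis using H G phi u v by auto
qed




lemma FV_hd: "p \<in> FV T r \<Longrightarrow> 1 \<le> r \<Longrightarrow> p!0 \<in> T"
  by (cases p) (auto simp: FV_def)

lemma RV_split: "a \<in> I \<Longrightarrow> RV T r I = Blk T r a \<union> RV T r (I - {a})"
  by (auto simp: RV_def Blk_def)

lemma RV_split_disj: "Blk T r a \<inter> RV T r (I - {a}) = {}"
  by (auto simp: RV_def Blk_def)

lemma core_split:
  assumes T: "finite T" and r: "1 \<le> r" "r + 2 \<le> card T" "5 \<le> card T \<or> r = 1"
    and IH: "\<forall>c\<in>T. hamiltonian_connected arr_adj (FV (T - {c}) (r - 1))"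
    and u: "u \<in> RV T r I" and v: "v \<in> RV T r I" and uv: "u!0 \<noteq> v!0"
  shows "\<exists>x x' Q. x \<in> Blk T r (u!0) \<and> (x \<noteq> u \<or> Blk T r (u!0) = {u}) \<and> arr_adj x x' \<and>
           ham_path arr_adj (RV T r (I - {u!0})) x' v Q"
proof -
  define a where "a = u!0"
  define b where "b = v!0"
  have aI: "a \<in> I \<inter> T" "b \<in> I \<inter> T" using u v r FV_hd by (auto simp: RV_def a_def b_def)
  define cs where "cs = sorted_list_of_set (I \<inter> T - {a, b}) @ [b]"
  have fin: "finite (I \<inter> T - {a,b})" using T by auto
  have scs: "set cs = I \<inter> T - {a}" using aI uv fin by (auto simp: cs_def a_def b_def)
  have dcs: "distinct (a # cs)" using fin uv by (auto simp: cs_def a_def b_def)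
  have lcs: "last cs = b" "cs \<noteq> []" by (auto simp: cs_def)
  have sall: "set (a # cs) \<subseteq> T" using scs aI by auto
  have B: "\<forall>c\<in>set (a # cs). Blk T r c \<noteq> {} \<and> hc2 arr_adj (Blk T r c)"
  proof
    fix c assume "c \<in> set (a # cs)"
    then have c: "c \<in> T" using sall by auto
    have "FV (T - {c}) (r - 1) \<noteq> {}" using T r c by (intro FV_ne) (auto simp: card_Diff_singleton)
    then have "Blk T r c \<noteq> {}" using Blk_eq2[OF r(1) c] by auto
    moreover have "hc2 arr_adj (Blk T r c)" using blk_hc2[OF r(1) c] IH c by auto
    ultimately show "Blk T r c \<noteq> {} \<and> hc2 arr_adj (Blk T r c)" by blast
  qed
  have G: "\<forall>c\<in>set (a # cs). \<forall>c'\<in>set (a # cs). c \<noteq> c' \<longrightarrow> Blk T r c \<inter> Blk T r c' = {} \<and> gts arr_adj (Blk T r c) (Blk T r c')"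
  proof (intro ballI impI)
    fix c c' assume "c \<in> set (a # cs)" "c' \<in> set (a # cs)" "c \<noteq> c'"
    moreover have "c \<in> T" "c' \<in> T" using calculation sall by auto
    ultimately show "Blk T r c \<inter> Blk T r c' = {} \<and> gts arr_adj (Blk T r c) (Blk T r c')"
      using gts_blk[OF T r] Blk_disj by blast
  qed
  have uB: "u \<in> Blk T r a" and vB: "v \<in> Blk T r (last cs)" using u v lcs by (auto simp: RV_def Blk_def a_def b_def)
  obtain x x' Q where xx: "x \<in> Blk T r a" "x \<noteq> u \<or> Blk T r a = {u}" "arr_adj x x'"
      "ham_path arr_adj (\<Union>c\<in>set cs. Blk T r c) x' v Q"
    using chain_first[OF dcs lcs(2) B G uB vB] by blast
  have "(\<Union>c\<in>set cs. Blk T r c) = RV T r (I - {a})"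
  proof -
    have "(I - {a}) \<inter> T = I \<inter> T - {a}" by auto
    then show ?thesis using RV_union[OF r(1), of T "I - {a}"] scs by simp
  qed
  then show ?thesis using xx by (auto simp: a_def)
qed

lemma core:
  assumes T: "finite T" and r: "1 \<le> r" "r + 2 \<le> card T" "5 \<le> card T \<or> r = 1"
    and IH: "\<forall>c\<in>T. hamiltonian_connected arr_adj (FV (T - {c}) (r - 1))"
    and u: "u \<in> RV T r I" and v: "v \<in> RV T r I" and uv: "u!0 \<noteq> v!0"
  shows "\<exists>P. ham_path arr_adj (RV T r I) u v P"
proof -
  obtain x x' Q where xx: "x \<in> Blk T r (u!0)" "x \<noteq> u \<or> Blk T r (u!0) = {u}" "arr_adj x x'"
      "ham_path arr_adj (RV T r (I - {u!0})) x' v Q"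
    using core_split[OF assms] by blast
  have a: "u!0 \<in> T" "u!0 \<in> I" using u r FV_hd by (auto simp: RV_def)
  have "hc2 arr_adj (Blk T r (u!0))" using blk_hc2[OF r(1) a(1)] IH a by auto
  moreover have "u \<in> Blk T r (u!0)" using u by (auto simp: RV_def Blk_def)
  moreover have "u \<noteq> x \<or> Blk T r (u!0) = {u}" using xx(2) by blast
  ultimately obtain P1 where P1: "ham_path arr_adj (Blk T r (u!0)) u x P1"
    using xx(1) unfolding hc2_def by blast
  have eq: "RV T r I = Blk T r (u!0) \<union> RV T r (I - {u!0})" using RV_split[OF a(2)] .
  from ham_path_append[OF P1 xx(4) RV_split_disj xx(3)] show ?thesis
    unfolding eq by blast
qed

lemma swp_transfer:
  assumes d: "d < r" and uv: "u \<in> FV T r" "v \<in> FV T r"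
    and P: "ham_path arr_adj (FV T r) (swp d u) (swp d v) P"
  shows "ham_path arr_adj (FV T r) u v (map (swp d) P)"
proof -
  have "ham_path arr_adj (FV T r) (swp d (swp d u)) (swp d (swp d v)) (map (swp d) P)"
  proof (rule ham_path_iso[OF P, where \<phi>="swp d"])
    show "\<forall>x\<in>FV T r. swp d x \<in> FV T r" using swp_FV d by auto
    show "\<forall>x\<in>FV T r. swp d x \<in> FV T r \<and> swp d (swp d x) = x" using swp_FV swp_swp d by (auto simp: FV_def)
    show "\<forall>x\<in>FV T r. swp d (swp d x) = x" using swp_swp d by (auto simp: FV_def)
    show "\<forall>x\<in>FV T r. \<forall>y\<in>FV T r. arr_adj x y \<longrightarrow> arr_adj (swp d x) (swp d y)"
      using swp_adj d by (auto simp: FV_def)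
  qed
  then show ?thesis using swp_swp d uv by (auto simp: FV_def)
qed

lemma RV_full: "1 \<le> r \<Longrightarrow> RV T r T = FV T r"
  using FV_hd by (auto simp: RV_def)

lemma F_thm: "finite T \<Longrightarrow> r + 2 \<le> card T \<Longrightarrow> hamiltonian_connected arr_adj (FV T r)"
proof (induction r arbitrary: T)
  case 0
  have "FV T 0 = {[]}" by (auto simp: FV_def)
  then show ?case by (auto simp: hamiltonian_connected_def)
next
  case (Suc r)
  show ?case unfolding hamiltonian_connected_def
  proof (intro ballI impI)
    fix u v assume u: "u \<in> FV T (Suc r)" and v: "v \<in> FV T (Suc r)" and uv: "u \<noteq> v"
    show "\<exists>P. ham_path arr_adj (FV T (Suc r)) u v P"
    proof (cases "card T = 4 \<and> Suc r = 2")
      case True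
      then show ?thesis using F42[of T u v] Suc.prems u v uv by (auto simp: numeral_2_eq_2)
    next
      case False
      then have c5: "5 \<le> card T \<or> Suc r = 1" using Suc.prems by auto
      obtain d where d: "d < Suc r" "u!d \<noteq> v!d" using diff_pos[of u v] u v uv by (auto simp: FV_def)
      have IH: "\<forall>c\<in>T. hamiltonian_connected arr_adj (FV (T - {c}) (Suc r - 1))"
        using Suc.IH Suc.prems by (auto simp: card_Diff_singleton)
      have su: "swp d u \<in> RV T (Suc r) T" "swp d v \<in> RV T (Suc r) T"
        using swp_FV[OF u d(1)] swp_FV[OF v d(1)] RV_full[of "Suc r" T] by auto
      have "swp d u ! 0 \<noteq> swp d v ! 0" using d u v swp_0 by (auto simp: FV_def)
      then obtain P where "ham_path arr_adj (RV T (Suc r) T) (swp d u) (swp d v) P"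
        using core[OF Suc.prems(1) _ Suc.prems(2) c5 IH su] by auto
      then have "ham_path arr_adj (FV T (Suc r)) (swp d u) (swp d v) P" using RV_full[of "Suc r" T] by simp
      from swp_transfer[OF d(1) u v this] show ?thesis by blast
    qed
  qed
qed

lemma gp_append: assumes "gp e P" shows "gp e (P @ Q)"
proof -
  obtain j where j: "Suc j < length P" "e \<notin> set (P!j)" "e \<notin> set (P!Suc j)" using assms by (auto simp: gp_def)
  then have "(P @ Q)!j = P!j" "(P @ Q)!Suc j = P!Suc j" "Suc j < length (P @ Q)" by (simp_all add: nth_append)
  then show ?thesis using j unfolding gp_def by metis
qed

lemma gp_rev: assumes "gp e P" shows "gp e (rev P)"
proof -
  obtain j where j: "Suc j < length P" "e \<notin> set (P!j)" "e \<notin> set (P!Suc j)" using assms by (auto simp: gp_def)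
  define j' where "j' = length P - Suc (Suc j)"
  have "Suc j' < length (rev P)" using j by (simp add: j'_def)
  moreover have "rev P ! j' = P ! Suc j" "rev P ! Suc j' = P ! j" using j by (simp_all add: rev_nth j'_def Suc_diff_Suc)
  ultimately show ?thesis using j unfolding gp_def by metis
qed

lemma gp_Cons: "c \<noteq> e \<Longrightarrow> gp e P \<Longrightarrow> gp e (map (Cons c) P)"
  unfolding gp_def by auto

lemma gp_swp: assumes "\<forall>x\<in>set P. d < length x" "gp e P" shows "gp e (map (swp d) P)"
proof -
  obtain j where j: "Suc j < length P" "e \<notin> set (P!j)" "e \<notin> set (P!Suc j)" using assms by (auto simp: gp_def)
  have "P!j \<in> set P" "P!Suc j \<in> set P" using j(1) by (simp_all add: nth_mem)
  then have "set (swp d (P!j)) = set (P!j)" "set (swp d (P!Suc j)) = set (P!Suc j)"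
  proof -
    have "d < length (P!j)" "d < length (P!Suc j)" using assms(1) \<open>P!j \<in> set P\<close> \<open>P!Suc j \<in> set P\<close> by auto
    then show "set (swp d (P!j)) = set (P!j)" "set (swp d (P!Suc j)) = set (P!Suc j)"
      using swp_set le_less_trans[OF le0] by blast+
  qed
  then show ?thesis using j unfolding gp_def by (intro exI[of _ j]) auto
qed

lemma gp_K:
  assumes "distinct P" "4 \<le> length P" "\<forall>x\<in>set P. \<forall>y\<in>set P. e \<in> set x \<longrightarrow> e \<in> set y \<longrightarrow> x = y"
  shows "gp e P"
proof (rule ccontr)
  assume n: "\<not> gp e P"
  have "\<not> (Suc 0 < length P \<and> e \<notin> set (P!0) \<and> e \<notin> set (P!Suc 0))" using n unfolding gp_def by blast
  then have A: "e \<in> set (P!0) \<or> e \<in> set (P!1)" using assms(2) by auto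
  have "\<not> (Suc 2 < length P \<and> e \<notin> set (P!2) \<and> e \<notin> set (P!Suc 2))" using n unfolding gp_def by blast
  then have B: "e \<in> set (P!2) \<or> e \<in> set (P!3)" using assms(2) by (auto simp: numeral_3_eq_3)
  have l: "0 < length P" "1 < length P" "2 < length P" "3 < length P" using assms(2) by auto
  have d: "P!i \<noteq> P!j" if "i < length P" "j < length P" "i \<noteq> j" for i j
    using assms(1) that by (simp add: nth_eq_iff_index_eq)
  have m: "P!i \<in> set P" if "i < length P" for i using that by simp
  have "P!0 \<noteq> P!2" "P!0 \<noteq> P!3" "P!1 \<noteq> P!2" "P!1 \<noteq> P!3" using d l by auto
  moreover have "P!0 \<in> set P" "P!1 \<in> set P" "P!2 \<in> set P" "P!3 \<in> set P" using m l by auto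
  ultimately show False using A B assms(3) by blast
qed

lemma blk_lift:
  assumes "1 \<le> r" "c \<in> T" "ham_path arr_adj (FV (T - {c}) (r - 1)) y x P"
  shows "ham_path arr_adj (Blk T r c) (c # y) (c # x) (map (Cons c) P)"
  by (rule ham_path_iso[OF assms(3), where \<phi>=tl]) (auto simp: Blk_eq2[OF assms(1,2)] arr_adj_Cons FV_def)

lemma Fe_thm:
  "finite T \<Longrightarrow> r + 2 \<le> card T \<Longrightarrow> 4 \<le> card T \<Longrightarrow> 1 \<le> r \<Longrightarrow> e \<in> T \<Longrightarrow>
   u \<in> FV T r \<Longrightarrow> v \<in> FV T r \<Longrightarrow> u \<noteq> v \<Longrightarrow> \<exists>P. ham_path arr_adj (FV T r) u v P \<and> gp e P"
proof (induction r arbitrary: T u v)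
  case 0 then show ?case by simp
next
  case (Suc r)
  note T = Suc.prems(1) and cT = Suc.prems(2,3) and e = Suc.prems(5) and u = Suc.prems(6) and v = Suc.prems(7)
    and uv = Suc.prems(8)
  show ?case
  proof (cases "r = 0")
    case True
    obtain P where P: "ham_path arr_adj (FV T (Suc r)) u v P"
      using F_thm[OF T cT(1)] u v uv unfolding hamiltonian_connected_def by blast
    have "length P = card (FV T (Suc r))" using P by (auto simp: ham_path_def distinct_card[symmetric])
    moreover have "card T \<le> card (FV T (Suc r))" using card_FV_ge[OF T] cT by simp
    ultimately have "4 \<le> length P" using cT by simp
    moreover have "\<forall>x\<in>set P. \<forall>y\<in>set P. e \<in> set x \<longrightarrow> e \<in> set y \<longrightarrow> x = y"
    proof (intro ballI impI)
      fix x y assume "x \<in> set P" "y \<in> set P" "e \<in> set x" "e \<in> set y"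
      moreover have "x \<in> FV T 1" "y \<in> FV T 1" using calculation P True by (auto simp: ham_path_def)
      ultimately show "x = y" by (auto simp: FV_def length_Suc_conv)
    qed
    ultimately have "gp e P" using gp_K P by (auto simp: ham_path_def)
    then show ?thesis using P by blast
  next
    case False
    show ?thesis
    proof (cases "card T = 4 \<and> Suc r = 2")
      case True
      then show ?thesis using F42[of T u v] T u v uv e by (auto simp: numeral_2_eq_2)
    next
      case False
      then have c5: "5 \<le> card T" using cT \<open>r \<noteq> 0\<close> by auto
      have IHF: "\<forall>c\<in>T. hamiltonian_connected arr_adj (FV (T - {c}) (Suc r - 1))"
        using F_thm T cT by (auto simp: card_Diff_singleton)
      have inner: "\<exists>P. ham_path arr_adj (FV T (Suc r)) u v P \<and> gp e P"
        if u: "u \<in> FV T (Suc r)" and v: "v \<in> FV T (Suc r)" and uv: "u!0 \<noteq> v!0" and ue: "u!0 \<noteq> e" for u v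
      proof -
        have uR: "u \<in> RV T (Suc r) T" "v \<in> RV T (Suc r) T" using u v RV_full[of "Suc r" T] by auto
        define a where "a = u!0"
        have aT: "a \<in> T" using u FV_hd a_def by auto
        obtain x x' Q where xx: "x \<in> Blk T (Suc r) a" "x \<noteq> u \<or> Blk T (Suc r) a = {u}" "arr_adj x x'"
          "ham_path arr_adj (RV T (Suc r) (T - {a})) x' v Q"
        proof -
          have o1: "1 \<le> Suc r" and o2: "5 \<le> card T \<or> Suc r = 1" using c5 by simp_all
          show ?thesis using core_split[OF T o1 cT(1) o2 IHF uR uv] that unfolding a_def by blast
        qed
        have Bq: "Blk T (Suc r) a = Cons a ` FV (T - {a}) r" using Blk_eq2[of "Suc r" a T] aT by simp
        have cTa: "card (T - {a}) = card T - 1" using aT T by (simp add: card_Diff_singleton)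
        have c1: "card (Blk T (Suc r) a) = card (FV (T - {a}) r)" unfolding Bq by (rule card_image) simp
        have c2: "card (T - {a}) \<le> card (FV (T - {a}) r)"
        proof (rule card_FV_ge)
          show "finite (T - {a})" using T by simp
          show "1 \<le> r" using \<open>r \<noteq> 0\<close> by simp
          show "r \<le> card (T - {a})" using cTa cT(1) by linarith
        qed
        have "card (Blk T (Suc r) a) \<noteq> 1" using c1 c2 cTa c5 by linarith
        then have xu: "x \<noteq> u"
        proof (rule contrapos_nn)
          assume "x = u"
          then have "Blk T (Suc r) a = {u}" using xx(2) by simp
          then show "card (Blk T (Suc r) a) = 1" by simp
        qed
        obtain u' where u': "u = a # u'" "u' \<in> FV (T - {a}) r"
          using u Bq a_def by (cases u) (auto simp: FV_def)
        obtain x'' where x'': "x = a # x''" "x'' \<in> FV (T - {a}) r" using xx(1) Bq by auto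
        have "u' \<noteq> x''" using xu u' x'' by auto
        moreover have "e \<in> T - {a}" using e ue a_def by auto
        ultimately obtain P1 where P1: "ham_path arr_adj (FV (T - {a}) r) u' x'' P1" "gp e P1"
        proof -
          have "r + 2 \<le> card (T - {a})" "4 \<le> card (T - {a})" using cT c5 aT T by (simp_all add: card_Diff_singleton)
          moreover have "finite (T - {a})" "1 \<le> r" using T \<open>r \<noteq> 0\<close> by auto
          ultimately have "\<exists>P. ham_path arr_adj (FV (T - {a}) r) u' x'' P \<and> gp e P"
            by (intro Suc.IH[of "T - {a}" u' x'']) (use u'(2) x''(2) \<open>u' \<noteq> x''\<close> \<open>e \<in> T - {a}\<close> in auto)
          then show ?thesis using that by blast
        qed
        have L: "ham_path arr_adj (Blk T (Suc r) a) u x (map (Cons a) P1)"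
        proof -
          have P1': "ham_path arr_adj (FV (T - {a}) (Suc r - 1)) u' x'' P1" using P1(1) by simp
          have "ham_path arr_adj (Blk T (Suc r) a) (a # u') (a # x'') (map (Cons a) P1)"
            by (rule blk_lift[OF _ aT P1']) simp
          then show ?thesis unfolding u'(1) x''(1) .
        qed
        have eq: "FV T (Suc r) = Blk T (Suc r) a \<union> RV T (Suc r) (T - {a})"
          using RV_split[OF aT, of T "Suc r"] RV_full[of "Suc r" T] by simp
        have "ham_path arr_adj (FV T (Suc r)) u v (map (Cons a) P1 @ Q)"
          unfolding eq by (rule ham_path_append[OF L xx(4) RV_split_disj xx(3)])
        moreover have "gp e (map (Cons a) P1)" using gp_Cons[OF _ P1(2)] ue a_def by simp
        then have "gp e (map (Cons a) P1 @ Q)" by (rule gp_append)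
        ultimately show ?thesis by blast
      qed
      obtain d where d: "d < Suc r" "u!d \<noteq> v!d" using diff_pos[of u v] u v uv by (auto simp: FV_def)
      have su: "swp d u \<in> FV T (Suc r)" "swp d v \<in> FV T (Suc r)"
        by (rule swp_FV[OF u d(1)], rule swp_FV[OF v d(1)])
      have "d < length u" "d < length v" using d(1) u v by (auto simp: FV_def)
      then have s0: "swp d u ! 0 \<noteq> swp d v ! 0" using d(2) by (simp add: swp_0)
      obtain P where P: "ham_path arr_adj (FV T (Suc r)) (swp d u) (swp d v) P" "gp e P"
      proof (cases "swp d u ! 0 = e")
        case False
        from inner[OF su s0 False] show ?thesis using that by blast
      next
        case True
        then have ve: "swp d v ! 0 \<noteq> e" using s0 by simp
        have s0': "swp d v ! 0 \<noteq> swp d u ! 0" using s0 by simp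
        from inner[OF su(2) su(1) s0' ve] obtain P' where
          P': "ham_path arr_adj (FV T (Suc r)) (swp d v) (swp d u) P'" "gp e P'" by blast
        have "ham_path arr_adj (FV T (Suc r)) (swp d u) (swp d v) (rev P')"
          by (rule ham_path_rev[OF P'(1) arr_adj_sym])
        moreover have "gp e (rev P')" by (rule gp_rev[OF P'(2)])
        ultimately show ?thesis by (rule that)
      qed
      have "\<forall>x\<in>set P. d < length x"
      proof
        fix x assume "x \<in> set P"
        then have "x \<in> FV T (Suc r)" using P(1) by (simp add: ham_path_def)
        then show "d < length x" using d(1) by (simp add: FV_def)
      qed
      then have "gp e (map (swp d) P)" by (rule gp_swp[OF _ P(2)])
      moreover have "ham_path arr_adj (FV T (Suc r)) u v (map (swp d) P)" by (rule swp_transfer[OF d(1) u v P(1)])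
      ultimately show ?thesis by blast
    qed
  qed
qed

lemma R_thm:
  assumes T: "finite T" and c5: "5 \<le> card T" and cT: "r + 2 \<le> card T" and r1: "1 \<le> r"
  shows "hamiltonian_connected arr_adj (RV T r I)"
proof (induction "card (I \<inter> T)" arbitrary: I rule: less_induct)
  case less
  have IHF: "\<forall>c\<in>T. hamiltonian_connected arr_adj (FV (T - {c}) (r - 1))"
  proof
    fix c assume "c \<in> T"
    then have "card (T - {c}) = card T - 1" using T by (simp add: card_Diff_singleton)
    then have "r - 1 + 2 \<le> card (T - {c})" using cT r1 by linarith
    then show "hamiltonian_connected arr_adj (FV (T - {c}) (r - 1))" using F_thm T by simp
  qed
  show ?case unfolding hamiltonian_connected_def
  proof (intro ballI impI)
    fix u v assume u: "u \<in> RV T r I" and v: "v \<in> RV T r I" and uv: "u \<noteq> v"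
    show "\<exists>P. ham_path arr_adj (RV T r I) u v P"
    proof (cases "u!0 = v!0")
      case False
      have o2: "5 \<le> card T \<or> r = 1" using c5 by simp
      show ?thesis by (rule core[OF T r1 cT o2 IHF u v False])
    next
      case True
      define c where "c = u!0"
      have uF: "u \<in> FV T r" and vF: "v \<in> FV T r" using u v by (simp_all add: RV_def)
      have cT': "c \<in> T" using FV_hd[OF uF r1] c_def by simp
      have cI: "c \<in> I" using u c_def by (simp add: RV_def)
      have uB: "u \<in> Blk T r c" "v \<in> Blk T r c" using uF vF True c_def by (simp_all add: Blk_def)
      have Bq: "Blk T r c = Cons c ` FV (T - {c}) (r - 1)" by (rule Blk_eq2[OF r1 cT'])
      obtain u' where u': "u = c # u'" "u' \<in> FV (T - {c}) (r - 1)" using uB(1) Bq by blast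
      obtain v' where v': "v = c # v'" "v' \<in> FV (T - {c}) (r - 1)" using uB(2) Bq by blast
      have uv': "u' \<noteq> v'" using uv u' v' by simp
      have eqI: "RV T r I = Blk T r c \<union> RV T r (I - {c})" by (rule RV_split[OF cI])
      show ?thesis
      proof (cases "I \<inter> T - {c} = {}")
        case True
        have "RV T r (I - {c}) = {}"
        proof -
          have "(I - {c}) \<inter> T = {}" using True by blast
          then show ?thesis using RV_union[OF r1, of T "I - {c}"] by simp
        qed
        then have eq: "RV T r I = Blk T r c" using eqI by simp
        have "hamiltonian_connected arr_adj (FV (T - {c}) (r - 1))" using IHF cT' by blast
        then obtain P where "ham_path arr_adj (FV (T - {c}) (r - 1)) u' v' P"
          using u'(2) v'(2) uv' unfolding hamiltonian_connected_def by blast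
        then have "ham_path arr_adj (Blk T r c) (c # u') (c # v') (map (Cons c) P)"
          by (rule blk_lift[OF r1 cT'])
        then show ?thesis unfolding eq u'(1) v'(1) by blast
      next
        case False
        then obtain j' where j': "j' \<in> I" "j' \<in> T" "j' \<noteq> c" by blast
        have r2: "1 \<le> r - 1"
        proof (rule ccontr)
          assume "\<not> 1 \<le> r - 1"
          then have "r - 1 = 0" by simp
          then have "u' = []" "v' = []" using u'(2) v'(2) by (simp_all add: FV_def)
          then show False using uv' by simp
        qed
        have cTc: "card (T - {c}) = card T - 1" using cT' T by (simp add: card_Diff_singleton)
        have f1: "finite (T - {c})" using T by simp
        have f2: "r - 1 + 2 \<le> card (T - {c})" using cTc cT r1 by linarith
        have f3: "4 \<le> card (T - {c})" using cTc c5 by linarith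
        have f4: "j' \<in> T - {c}" using j' by simp
        obtain P where P: "ham_path arr_adj (FV (T - {c}) (r - 1)) u' v' P" "gp j' P"
          using Fe_thm[OF f1 f2 f3 r2 f4 u'(2) v'(2) uv'] by blast
        obtain j where j: "Suc j < length P" "j' \<notin> set (P!j)" "j' \<notin> set (P!Suc j)"
          using P(2) by (auto simp: gp_def)
        define w where "w = P!j"
        define z where "z = P!Suc j"
        have Pf: "distinct P" "set P = FV (T - {c}) (r - 1)" using P(1) by (simp_all add: ham_path_def)
        have wz: "w \<in> FV (T - {c}) (r - 1)" "z \<in> FV (T - {c}) (r - 1)"
          using j(1) Pf(2) nth_mem[of j P] nth_mem[of "Suc j" P] by (simp_all add: w_def z_def)
        have wnz: "w \<noteq> z" using Pf(1) j(1) by (simp add: w_def z_def nth_eq_iff_index_eq)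
        have jw: "j' # w \<in> RV T r (I - {c})"
        proof -
          have "length (j' # w) = r" using wz(1) r1 by (simp add: FV_def)
          moreover have "distinct (j' # w)" using wz(1) j(2) by (simp add: FV_def w_def)
          moreover have "set (j' # w) \<subseteq> T" using wz(1) j' by (auto simp: FV_def)
          ultimately show ?thesis using j' by (simp add: RV_def FV_def)
        qed
        have jz: "j' # z \<in> RV T r (I - {c})"
        proof -
          have "length (j' # z) = r" using wz(2) r1 by (simp add: FV_def)
          moreover have "distinct (j' # z)" using wz(2) j(3) by (simp add: FV_def z_def)
          moreover have "set (j' # z) \<subseteq> T" using wz(2) j' by (auto simp: FV_def)
          ultimately show ?thesis using j' by (simp add: RV_def FV_def)
        qed
        have lt: "card ((I - {c}) \<inter> T) < card (I \<inter> T)"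
        proof (rule psubset_card_mono)
          show "finite (I \<inter> T)" using T by simp
          show "(I - {c}) \<inter> T \<subset> I \<inter> T" using cI cT' by blast
        qed
        have "hamiltonian_connected arr_adj (RV T r (I - {c}))" by (rule less.hyps[OF lt])
        moreover have "j' # w \<noteq> j' # z" using wnz by simp
        ultimately obtain Q where Q: "ham_path arr_adj (RV T r (I - {c})) (j' # w) (j' # z) Q"
          using jw jz unfolding hamiltonian_connected_def by blast
        have Pc: "ham_path arr_adj (Blk T r c) (c # u') (c # v') (map (Cons c) P)"
          by (rule blk_lift[OF r1 cT' P(1)])
        have jl: "Suc j < length (map (Cons c) P)" using j(1) by simp
        have n1: "map (Cons c) P ! j = c # w" "map (Cons c) P ! Suc j = c # z" using j(1) by (simp_all add: w_def z_def)
        have lw: "length w = length w" "length z = length z" by simp_all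
        have a1: "arr_adj (c # w) (j' # w)" using j'(3) by (simp add: arr_adj_Cons)
        have a2: "arr_adj (j' # z) (c # z)" using j'(3) by (simp add: arr_adj_Cons)
        have "ham_path arr_adj (Blk T r c \<union> RV T r (I - {c})) (c # u') (c # v')
            (take (Suc j) (map (Cons c) P) @ Q @ drop (Suc j) (map (Cons c) P))"
          by (rule ham_path_splice[OF Pc jl Q RV_split_disj]) (simp_all add: n1 a1 a2)
        then show ?thesis unfolding eqI u'(1) v'(1) by blast
      qed
    qed
  qed
qed

theorem lemma4:
  fixes n k i :: nat and I :: "nat set"
  assumes "n \<ge> 5" and "k \<ge> 2" and "n - k \<ge> 2"
    and "1 \<le> i" and "i \<le> k"
    and "I \<subseteq> {1..n}" and "I \<noteq> {}"
  shows "hamiltonian_connected arr_adj (arr_sub_vertices n k i I)"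
proof -
  define T where "T = {1..n}"
  define d where "d = i - 1"
  have T: "finite T" "card T = n" by (simp_all add: T_def)
  have c5: "5 \<le> card T" and cT: "k + 2 \<le> card T" and k1: "1 \<le> k" using assms T by linarith+
  have d: "d < k" using assms by (simp add: d_def)
  have HR: "hamiltonian_connected arr_adj (RV T k I)" by (rule R_thm[OF T(1) c5 cT k1])
  have V: "arr_sub_vertices n k i I = {p \<in> FV T k. p!d \<in> I}"
    by (simp add: arr_sub_vertices_def arr_vertices_def FV_def T_def d_def)
  have swd: "swp d p ! d = p ! 0" if "d < length p" for p
  proof -
    have "0 < length p" using that by (rule le_less_trans[OF le0])
    then show ?thesis using that by (simp add: swp_nth sw_def)
  qed
  show ?thesis unfolding hamiltonian_connected_def
  proof (intro ballI impI)
    fix u v assume u: "u \<in> arr_sub_vertices n k i I" and v: "v \<in> arr_sub_vertices n k i I" and uv: "u \<noteq> v"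
    have uF: "u \<in> FV T k" "u!d \<in> I" and vF: "v \<in> FV T k" "v!d \<in> I" using u v V by auto
    have lu: "d < length u" "d < length v" using uF vF d by (simp_all add: FV_def)
    have su: "swp d u \<in> RV T k I" "swp d v \<in> RV T k I"
      using swp_FV[OF uF(1) d] swp_FV[OF vF(1) d] swp_0[OF lu(1)] swp_0[OF lu(2)] uF(2) vF(2)
      by (simp_all add: RV_def)
    have "swp d u \<noteq> swp d v" using uv swp_swp[OF lu(1)] swp_swp[OF lu(2)] by metis
    then obtain P where P: "ham_path arr_adj (RV T k I) (swp d u) (swp d v) P"
      using HR su unfolding hamiltonian_connected_def by blast
    have "ham_path arr_adj (arr_sub_vertices n k i I) (swp d (swp d u)) (swp d (swp d v)) (map (swp d) P)"
    proof (rule ham_path_iso[OF P, where \<phi>="swp d"])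
      show "\<forall>x\<in>RV T k I. swp d x \<in> arr_sub_vertices n k i I"
      proof
        fix x assume x: "x \<in> RV T k I"
        then have "x \<in> FV T k" "x!0 \<in> I" by (simp_all add: RV_def)
        moreover have "d < length x" using calculation(1) d by (simp add: FV_def)
        ultimately show "swp d x \<in> arr_sub_vertices n k i I" using swp_FV[OF _ d] swd V by simp
      qed
      show "\<forall>x\<in>arr_sub_vertices n k i I. swp d x \<in> RV T k I \<and> swp d (swp d x) = x"
      proof
        fix x assume x: "x \<in> arr_sub_vertices n k i I"
        then have "x \<in> FV T k" "x!d \<in> I" using V by auto
        moreover have "d < length x" using calculation(1) d by (simp add: FV_def)
        ultimately show "swp d x \<in> RV T k I \<and> swp d (swp d x) = x"
          using swp_FV[OF _ d] swp_0 swp_swp by (simp add: RV_def)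
      qed
      show "\<forall>x\<in>RV T k I. swp d (swp d x) = x"
      proof
        fix x assume "x \<in> RV T k I"
        then have "d < length x" using d by (simp add: RV_def FV_def)
        then show "swp d (swp d x) = x" by (rule swp_swp)
      qed
      show "\<forall>x\<in>RV T k I. \<forall>y\<in>RV T k I. arr_adj x y \<longrightarrow> arr_adj (swp d x) (swp d y)"
      proof (intro ballI impI)
        fix x y assume "x \<in> RV T k I" "y \<in> RV T k I" "arr_adj x y"
        moreover have "d < length x" "length x = length y" using calculation d by (simp_all add: RV_def FV_def)
        ultimately show "arr_adj (swp d x) (swp d y)" using swp_adj by simp
      qed
    qed
    then show "\<exists>P. ham_path arr_adj (arr_sub_vertices n k i I) u v P"
      using swp_swp[OF lu(1)] swp_swp[OF lu(2)] by auto
  qed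
qed


end
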